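(* Let $h:[0,1]\to(0,\infty)$ and $f:[0,\infty)\to[0,\infty)$ be continuously differentiable, suppose there is $t_0\ge 0$ with $f(t)>0$ for all $t\ge t_0$ and $f\in C^2([t_0,\infty))$, and put $g(t)=\log f(t)$ for $t\ge t_0$. Assume condition (H1) stated in the context. Let $(\lambda_n,\mu_n,u_n)\in(0,\infty)\times(0,\infty)\times C^2([0,1])$, $n\in\mathbb{N}$, satisfy $$-u_n''-\tfrac1r u_n'=\lambda_n h(r) f(u_n),\quad u_n>0 \text{ in }(0,1),\qquad u_n(0)=\mu_n,\ u_n'(0)=0=u_n(1),$$ and suppose $\mu_n\to\infty$. For each large $n$ define $\gamma_{0,n}>0$ by $\lambda_n h(0) f'(\mu_n)\gamma_{0,n}^2=1$ and $z_{0,n}(r)=g'(\mu_n)(u_n(\gamma_{0,n}r)-\mu_n)$ for $r\in[0,1/\gamma_{0,n}]$. Let $z_0(r)=\log\frac{64}{(8+r^2)^2}$ for $r\ge0$. Then $\gamma_{0,n}\to0$ as $n\to\infty$, and, up to a subsequence, there exists a sequence $(\rho_{0,n})\subset(0,1)$ such that $u_n(\rho_{0,n})/\mu_n\to1$, $\rho_{0,n}\to0$, $\rho_{0,n}/\gamma_{0,n}\to\infty$, $\|z_{0,n}-z_0\|_{C^2([0,\rho_{0,n}/\gamma_{0,n}])}\to0$ as $n\to\infty$, and $$\lim_{n\to\infty} g'(\mu_n)\int_0^{\rho_{0,n}}\lambda_n h f(u_n)\,r\,dr=4=\lim_{n\to\infty}\int_0^{\rho_{0,n}}\lambda_n h 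f'(u_n)\,r\,dr.$$
   Context: Condition (H1): (i) $g'(t)>0$ and $g''(t)>0$ for all $t\ge t_0$, and there is a pair $(q,p)$ with either $q=1$ and $p\in(0,\infty]$, or $q\in(1,\infty)$ and $p\in(0,\infty)$, such that $\lim_{t\to\infty}\frac{g'(t)^2}{g(t)g''(t)}=q$ and $\lim_{t\to\infty}\frac{tg'(t)}{g(t)}=p$; (ii) if $q=1$, then $tg'(t)/g(t)$ is nondecreasing on $[t_0,\infty)$ and there exist $k\in\mathbb{N}$ and $\hat g\in C^2([t_0,\infty))$ with $f(t)=\exp_k(\hat g(t))$ and $\hat g'(t)/\hat g(t)$ nonincreasing for all $t\ge t_0$, where $\exp_1=\exp$ and $\exp_k(t)=\exp_{k-1}(\exp(t))$. In integrals, $h$ and $f(u_n)$ are evaluated at $r$, i.e. $h=h(r)$, $f(u_n)=f(u_n(r))$. *)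

theory Defs
  imports "HOL-Analysis.Analysis"
begin

fun exp_iter :: "nat \<Rightarrow> real \<Rightarrow> real" where
  "exp_iter 0 t = t"
| "exp_iter (Suc k) t = exp_iter k (exp t)"

definition d1 :: "real set \<Rightarrow> (real \<Rightarrow> real) \<Rightarrow> real \<Rightarrow> real" where
  "d1 S z x = vector_derivative z (at x within S)"

definition d2 :: "real set \<Rightarrow> (real \<Rightarrow> real) \<Rightarrow> real \<Rightarrow> real" where
  "d2 S z x = vector_derivative (d1 S z) (at x within S)"

definition C2_norm :: "real set \<Rightarrow> (real \<Rightarrow> real) \<Rightarrow> real" where
  "C2_norm S z = (SUP x\<in>S. \<bar>z x\<bar>) + (SUP x\<in>S. \<bar>d1 S z x\<bar>) + (SUP x\<in>S. \<bar>d2 S z x\<bar>)"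

text \<open>Condition (H1) for f with g = log f on [t0,\<infinity>); gd, gdd are g', g''.\<close>
definition H1 :: "(real \<Rightarrow> real) \<Rightarrow> (real \<Rightarrow> real) \<Rightarrow> (real \<Rightarrow> real) \<Rightarrow> real \<Rightarrow> bool" where
  "H1 f gd gdd t0 \<longleftrightarrow>
    (\<forall>t\<ge>t0. gd t > 0 \<and> gdd t > 0) \<and>
    (\<exists>q. ((\<lambda>t. (gd t)\<^sup>2 / (ln (f t) * gdd t)) \<longlongrightarrow> q) at_top \<and>
      ((q = 1 \<and> ((\<exists>p>0. ((\<lambda>t. t * gd t / ln (f t)) \<longlongrightarrow> p) at_top)
                 \<or> filterlim (\<lambda>t. t * gd t / ln (f t)) at_top at_top))
       \<or> (q > 1 \<and> (\<exists>p>0. ((\<lambda>t. t * gd t / ln (f t)) \<longlongrightarrow> p) at_top))) \<and>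
      (q = 1 \<longrightarrow>
         mono_on {t0..} (\<lambda>t. t * gd t / ln (f t)) \<and>
         (\<exists>k::nat. k \<ge> 1 \<and> (\<exists>gh gh' gh''.
             (\<forall>t\<ge>t0. (gh has_real_derivative gh' t) (at t within {t0..}) \<and>
                      (gh' has_real_derivative gh'' t) (at t within {t0..})) \<and>
             continuous_on {t0..} gh'' \<and>
             (\<forall>t\<ge>t0. f t = exp_iter k (gh t)) \<and>
             antimono_on {t0..} (\<lambda>t. gh' t / gh t)))))"

end

theory Submission
  imports Defs "HOL-Real_Asymp.Real_Asymp"
begin


lemma deriv_within_ge_at:
  "(f has_real_derivative D) (at x within {a..}) \<Longrightarrow> a < x \<Longrightarrow> (f has_real_derivative D) (at x)"
  using at_within_interior[of x "{a..}"] interior_real_atLeast[of a] by auto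

lemma deriv_within_Icc_at:
  "(f has_real_derivative D) (at x within {a..b}) \<Longrightarrow> a < x \<Longrightarrow> x < b \<Longrightarrow> (f has_real_derivative D) (at x)"
  using at_within_Icc_at[of a x b] by auto

lemma deriv_cont:
  "(\<And>x. x \<in> S \<Longrightarrow> (f has_real_derivative f' x) (at x within S)) \<Longrightarrow> continuous_on S f"
  by (rule has_derivative_continuous_on) (auto simp: has_field_derivative_def)

lemma mvt_quad:
  fixes \<phi> \<phi>' :: "real \<Rightarrow> real"
  assumes s: "0 \<le> s" and c: "continuous_on {0..s} \<phi>" and z: "\<phi> 0 = 0"
    and d: "\<And>t. 0 < t \<Longrightarrow> t < s \<Longrightarrow> (\<phi> has_real_derivative \<phi>' t) (at t)"
    and b: "\<And>t. 0 < t \<Longrightarrow> t < s \<Longrightarrow> \<bar>\<phi>' t\<bar> \<le> B * t"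
  shows "\<bar>\<phi> s\<bar> \<le> B * s^2 / 2"
proof -
  have 1: "(\<lambda>t. B*t^2/2 - \<phi> t) 0 \<le> (\<lambda>t. B*t^2/2 - \<phi> t) s"
  proof (rule DERIV_nonneg_imp_increasing_open[OF s])
    fix x assume x: "0 < x" "x < s"
    show "\<exists>y. ((\<lambda>t. B*t^2/2 - \<phi> t) has_real_derivative y) (at x) \<and> 0 \<le> y"
      using d[OF x] b[OF x]
      by (intro exI[of _ "B*x - \<phi>' x"]) (auto intro!: derivative_eq_intros)
  qed (auto intro!: continuous_intros c)
  have 2: "(\<lambda>t. B*t^2/2 + \<phi> t) 0 \<le> (\<lambda>t. B*t^2/2 + \<phi> t) s"
  proof (rule DERIV_nonneg_imp_increasing_open[OF s])
    fix x assume x: "0 < x" "x < s"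
    show "\<exists>y. ((\<lambda>t. B*t^2/2 + \<phi> t) has_real_derivative y) (at x) \<and> 0 \<le> y"
      using d[OF x] b[OF x]
      by (intro exI[of _ "B*x + \<phi>' x"]) (auto intro!: derivative_eq_intros)
  qed (auto intro!: continuous_intros c)
  show ?thesis using 1 2 z by auto
qed

lemma gronwall_core:
  fixes W Wp Wpp D :: "real \<Rightarrow> real"
  assumes R: "0 < R" and eta: "0 < \<eta>"
   and dW: "\<And>s. s \<in> {0..R} \<Longrightarrow> (W has_real_derivative Wp s) (at s within {0..R})"
   and dWp: "\<And>s. s \<in> {0..R} \<Longrightarrow> (Wp has_real_derivative Wpp s) (at s within {0..R})"
   and cWpp: "continuous_on {0..R} Wpp"
   and W0: "W 0 = 0" and Wp0: "Wp 0 = 0"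
   and ode: "\<And>s. 0 < s \<Longrightarrow> s \<le> R \<Longrightarrow> Wpp s = - D s - Wp s / s"
   and Dbd: "\<And>s. s \<in> {0..R} \<Longrightarrow> \<bar>D s\<bar> \<le> \<eta> + \<bar>W s\<bar>"
  shows "\<forall>s\<in>{0..R}. \<bar>W s\<bar> \<le> (1 + 2*exp(R^2)) * (R + 2) * \<eta> \<and> \<bar>Wp s\<bar> \<le> (1 + 2*exp(R^2)) * (R + 2) * \<eta>
      \<and> \<bar>Wpp s\<bar> \<le> (1 + 2*exp(R^2)) * (R + 2) * \<eta>"
proof -
  have cW: "continuous_on {0..R} W" by (rule deriv_cont) (rule dW)
  have cWp: "continuous_on {0..R} Wp" by (rule deriv_cont) (rule dWp)
  have A: "\<bar>Wp t\<bar> \<le> (\<eta> + P) * t / 2"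
    if t: "t \<in> {0..R}" and P: "\<And>\<tau>. \<tau> \<in> {0..t} \<Longrightarrow> \<bar>W \<tau>\<bar> \<le> P" for t P
  proof (cases "t = 0")
    case True then show ?thesis using Wp0 by simp
  next
    case False
    then have tp: "0 < t" using t by auto
    have "\<bar>(\<lambda>s. s * Wp s) t\<bar> \<le> (\<eta> + P) * t^2 / 2"
    proof (rule mvt_quad[where \<phi>' = "\<lambda>s. - s * D s"])
      show "0 \<le> t" using tp by simp
      show "continuous_on {0..t} (\<lambda>s. s * Wp s)"
        by (intro continuous_intros continuous_on_subset[OF cWp]) (use t in auto)
      show "0 * Wp 0 = 0" by simp
    next
      fix \<tau> assume \<tau>: "0 < \<tau>" "\<tau> < t"
      have "(Wp has_real_derivative Wpp \<tau>) (at \<tau>)"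
        using dWp[of \<tau>] \<tau> t by (intro deriv_within_Icc_at[of _ _ _ 0 R]) auto
      then have "((\<lambda>s. s * Wp s) has_real_derivative (1 * Wp \<tau> + \<tau> * Wpp \<tau>)) (at \<tau>)"
        by (intro derivative_eq_intros) auto
      moreover have "1 * Wp \<tau> + \<tau> * Wpp \<tau> = - \<tau> * D \<tau>"
        using ode[of \<tau>] \<tau> t by (simp add: field_simps)
      ultimately show "((\<lambda>s. s * Wp s) has_real_derivative - \<tau> * D \<tau>) (at \<tau>)" by simp
    next
      fix \<tau> assume \<tau>: "0 < \<tau>" "\<tau> < t"
      have "\<bar>D \<tau>\<bar> \<le> \<eta> + P" using Dbd[of \<tau>] P[of \<tau>] \<tau> t by auto
      then show "\<bar>- \<tau> * D \<tau>\<bar> \<le> (\<eta> + P) * \<tau>" using \<tau>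
        by (simp add: abs_mult mult.commute mult_left_mono)
    qed
    then have "t * \<bar>Wp t\<bar> \<le> t * ((\<eta> + P) * t / 2)" using tp
      by (simp add: abs_mult power2_eq_square)
    then show ?thesis using tp by (simp add: mult_le_cancel_left_pos)
  qed
  define \<psi> where "\<psi> s = 2 * \<eta> * exp (R * s)" for s
  have \<psi>ge: "2 * \<eta> \<le> \<psi> s" if "0 \<le> s" for s
    using eta R that by (simp add: \<psi>_def)
  have \<psi>mono: "\<psi> s \<le> \<psi> t" if "s \<le> t" for s t
    using eta R that by (simp add: \<psi>_def mult_left_mono)
  have B: "\<forall>s\<in>{0..R}. \<bar>W s\<bar> < \<psi> s"
  proof (rule ccontr)
    assume neg: "\<not> (\<forall>s\<in>{0..R}. \<bar>W s\<bar> < \<psi> s)"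
    define S where "S = {s \<in> {0..R}. \<psi> s \<le> \<bar>W s\<bar>}"
    have Sne: "S \<noteq> {}" using neg by (auto simp: S_def not_less)
    have "S = {0..R} \<inter> (\<lambda>s. \<psi> s - \<bar>W s\<bar>) -` {..0}" by (auto simp: S_def)
    moreover have "closed ({0..R} \<inter> (\<lambda>s. \<psi> s - \<bar>W s\<bar>) -` {..0})"
      by (intro continuous_closed_preimage) (auto simp: \<psi>_def intro!: continuous_intros cW)
    ultimately have Scl: "closed S" by simp
    have Sbd: "bdd_below S" by (auto simp: S_def bdd_below_def)
    define s where "s = Inf S"
    have sS: "s \<in> S" unfolding s_def by (rule closed_contains_Inf[OF Sne Sbd Scl])
    then have s01: "0 \<le> s" "s \<le> R" and sW: "\<psi> s \<le> \<bar>W s\<bar>" by (auto simp: S_def)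
    have spos: "0 < s"
    proof (rule ccontr)
      assume "\<not> 0 < s" then have "s = 0" using s01 by simp
      then show False using sW W0 \<psi>ge[of 0] eta by simp
    qed
    have below: "\<bar>W \<tau>\<bar> < \<psi> \<tau>" if "0 \<le> \<tau>" "\<tau> < s" for \<tau>
    proof (rule ccontr)
      assume "\<not> ?thesis"
      then have "\<tau> \<in> S" using that s01 by (auto simp: S_def)
      then have "s \<le> \<tau>" unfolding s_def by (rule cInf_lower[OF _ Sbd])
      then show False using that by simp
    qed
    have Wpb: "\<bar>Wp x\<bar> \<le> R * \<psi> x" if x: "0 < x" "x < s" for x
    proof -
      have "\<bar>Wp x\<bar> \<le> (\<eta> + \<psi> x) * x / 2"
      proof (rule A)
        show "x \<in> {0..R}" using x s01 by auto
        fix \<tau> assume "\<tau> \<in> {0..x}"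
        then have "\<bar>W \<tau>\<bar> < \<psi> \<tau>" "\<psi> \<tau> \<le> \<psi> x" using below[of \<tau>] \<psi>mono[of \<tau> x] x by auto
        then show "\<bar>W \<tau>\<bar> \<le> \<psi> x" by simp
      qed
      also have "\<dots> \<le> (\<eta> + \<psi> x) * R / 2"
        using x s01 eta \<psi>ge[of x] by (intro divide_right_mono mult_left_mono) auto
      also have "\<dots> \<le> R * \<psi> x" using \<psi>ge[of x] x R eta by (simp add: field_simps)
      finally show ?thesis .
    qed
    have d\<psi>: "(\<psi> has_real_derivative R * \<psi> x) (at x)" for x
      unfolding \<psi>_def by (auto intro!: derivative_eq_intros)
    have dWx: "(W has_real_derivative Wp x) (at x)" if "0 < x" "x < s" for x
      using dW[of x] that s01 by (intro deriv_within_Icc_at[of _ _ _ 0 R]) auto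
    have cs: "continuous_on {0..s} W" using continuous_on_subset[OF cW] s01 by auto
    have 1: "(\<lambda>t. \<psi> t - W t) 0 \<le> (\<lambda>t. \<psi> t - W t) s"
    proof (rule DERIV_nonneg_imp_increasing_open[where f="\<lambda>t. \<psi> t - W t" and a=0 and b=s])
      fix x assume x: "0 < x" "x < s"
      show "\<exists>y. ((\<lambda>t. \<psi> t - W t) has_real_derivative y) (at x) \<and> 0 \<le> y"
        using Wpb[OF x] d\<psi>[of x] dWx[OF x]
        by (intro exI[of _ "R * \<psi> x - Wp x"] conjI DERIV_diff) (auto simp: abs_le_iff)
    qed (use s01 in \<open>auto simp: \<psi>_def intro!: continuous_intros cs\<close>)
    have 2: "(\<lambda>t. \<psi> t + W t) 0 \<le> (\<lambda>t. \<psi> t + W t) s"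
    proof (rule DERIV_nonneg_imp_increasing_open[where f="\<lambda>t. \<psi> t + W t" and a=0 and b=s])
      fix x assume x: "0 < x" "x < s"
      show "\<exists>y. ((\<lambda>t. \<psi> t + W t) has_real_derivative y) (at x) \<and> 0 \<le> y"
        using Wpb[OF x] d\<psi>[of x] dWx[OF x]
        by (intro exI[of _ "R * \<psi> x + Wp x"] conjI DERIV_add) (auto simp: abs_le_iff)
    qed (use s01 in \<open>auto simp: \<psi>_def intro!: continuous_intros cs\<close>)
    have "\<psi> 0 = 2 * \<eta>" by (simp add: \<psi>_def)
    then show False using 1 2 W0 sW eta by auto
  qed
  define P where "P = 2 * \<eta> * exp (R^2)"
  have WP: "\<bar>W s\<bar> \<le> P" if "s \<in> {0..R}" for s
  proof -
    have "\<psi> s \<le> P" using that eta R unfolding \<psi>_def P_def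
      by (auto simp: power2_eq_square intro!: mult_left_mono mult_right_mono)
    then show ?thesis using B that by force
  qed
  define Bd where "Bd = \<eta> + P"
  have DB: "\<bar>D s\<bar> \<le> Bd" if "s \<in> {0..R}" for s using Dbd[OF that] WP[OF that] by (simp add: Bd_def)
  have WpB: "\<bar>Wp s\<bar> \<le> Bd * R / 2" if s: "s \<in> {0..R}" for s
  proof -
    have "\<bar>Wp s\<bar> \<le> Bd * s / 2" using A[OF s, of P] WP s by (auto simp: Bd_def)
    also have "\<dots> \<le> Bd * R / 2" using s eta by (auto simp: Bd_def P_def intro!: mult_left_mono)
    finally show ?thesis .
  qed
  have WppB': "\<bar>Wpp s\<bar> \<le> 3 * Bd / 2" if s: "0 < s" "s \<le> R" for s
  proof -
    have "\<bar>Wp s\<bar> \<le> Bd * s / 2" using A[of s P] WP s by (auto simp: Bd_def)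
    then have "\<bar>Wp s / s\<bar> \<le> Bd / 2" using s by (simp add: field_simps)
    moreover have "\<bar>D s\<bar> \<le> Bd" using DB s by auto
    ultimately show ?thesis unfolding ode[OF s] by linarith
  qed
  have WppB: "\<bar>Wpp s\<bar> \<le> 3 * Bd / 2" if s: "s \<in> {0..R}" for s
  proof (cases "s = 0")
    case False then show ?thesis using WppB' s by auto
  next
    case True
    have "((\<lambda>x. \<bar>Wpp x\<bar>) \<longlongrightarrow> \<bar>Wpp 0\<bar>) (at_right 0)"
    proof -
      have "(Wpp \<longlongrightarrow> Wpp 0) (at 0 within {0..R})"
        using cWpp R by (simp add: continuous_on_def)
      then show ?thesis using at_within_Icc_at_right[OF R] by (simp add: tendsto_rabs)
    qed
    moreover have "\<forall>\<^sub>F x in at_right 0. \<bar>Wpp x\<bar> \<le> 3 * Bd / 2"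
    proof -
      have "\<forall>y>0. y < R \<longrightarrow> \<bar>Wpp y\<bar> \<le> 3 * Bd / 2" using WppB' by simp
      then show ?thesis unfolding eventually_at_right[of 0 R, OF R] using R by blast
    qed
    ultimately have "\<bar>Wpp 0\<bar> \<le> 3 * Bd / 2"
      by (rule tendsto_upperbound) simp
    then show ?thesis using True by simp
  qed
  have Bd1: "Bd = (1 + 2*exp(R^2)) * \<eta>" by (simp add: Bd_def P_def algebra_simps)
  have K: "Bd * (R + 2) = (1 + 2*exp(R^2)) * (R + 2) * \<eta>" unfolding Bd1 by (simp add: ac_simps)
  have Bd0: "0 \<le> Bd" using eta by (simp add: Bd_def P_def)
  have PB: "P \<le> Bd" using eta by (simp add: Bd_def)
  have k1: "Bd \<le> Bd * (R + 2)"
  proof -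
    have "0 \<le> Bd * (R + 1)" using Bd0 R by simp
    moreover have "Bd * (R + 2) = Bd + Bd * (R + 1)" by (simp add: algebra_simps)
    ultimately show ?thesis by linarith
  qed
  have k2: "Bd * R / 2 \<le> Bd * (R + 2)"
  proof -
    have "0 \<le> Bd * (R / 2 + 2)" using Bd0 R by simp
    moreover have "Bd * (R + 2) = Bd * R / 2 + Bd * (R / 2 + 2)" by (simp add: algebra_simps)
    ultimately show ?thesis by linarith
  qed
  have k3: "3 * Bd / 2 \<le> Bd * (R + 2)"
  proof -
    have "0 \<le> Bd * (R + 1 / 2)" using Bd0 R by simp
    moreover have "Bd * (R + 2) = 3 * Bd / 2 + Bd * (R + 1 / 2)" by (simp add: algebra_simps)
    ultimately show ?thesis by linarith
  qed
  show ?thesis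
  proof safe
    fix s assume s: "s \<in> {0..R}"
    show "\<bar>W s\<bar> \<le> (1 + 2*exp(R^2)) * (R + 2) * \<eta>"
      using WP[OF s] PB k1 K by linarith
    show "\<bar>Wp s\<bar> \<le> (1 + 2*exp(R^2)) * (R + 2) * \<eta>"
      using WpB[OF s] k2 K by linarith
    show "\<bar>Wpp s\<bar> \<le> (1 + 2*exp(R^2)) * (R + 2) * \<eta>"
      using WppB[OF s] k3 K by linarith
  qed
qed

lemma exp_lip:
  fixes x y :: real
  assumes "x \<le> 0" "y \<le> 0"
  shows "\<bar>exp x - exp y\<bar> \<le> \<bar>x - y\<bar>"
proof -
  have *: "exp p - exp q \<le> p - q" if "q \<le> p" "p \<le> 0" for p q :: real
  proof -
    have "exp p - exp q = exp p * (1 - exp (q - p))" by (simp add: algebra_simps exp_diff)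
    also have "\<dots> \<le> 1 * (1 - exp (q - p))"
      using that by (intro mult_right_mono) auto
    also have "\<dots> = 1 - exp (q - p)" by simp
    also have "\<dots> \<le> p - q" using exp_ge_add_one_self[of "q - p"] by linarith
    finally show ?thesis .
  qed
  show ?thesis
  proof (cases "y \<le> x")
    case True then show ?thesis using *[of y x] assms by auto
  next
    case False then show ?thesis using *[of x y] assms by auto
  qed
qed

lemma deriv_scaled:
  fixes v v' :: "real \<Rightarrow> real"
  assumes a: "0 < a" and aR: "a * R \<le> 1" and s: "s \<in> {0..R}"
    and dv: "\<forall>r\<in>{0..1}. (v has_real_derivative v' r) (at r within {0..1})"
  shows "((\<lambda>s. v (a * s)) has_real_derivative v' (a * s) * a) (at s within {0..R})"
proof -
  have img: "(\<lambda>s. a * s) ` {0..R} \<subseteq> {0..1}"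
  proof
    fix y assume "y \<in> (\<lambda>s. a * s) ` {0..R}"
    then obtain x where x: "x \<in> {0..R}" "y = a * x" by auto
    have "a * x \<le> a * R" using x a by (intro mult_left_mono) auto
    then have "a * x \<le> 1" using aR by linarith
    then show "y \<in> {0..1}" using x a by auto
  qed
  have as: "a * s \<in> {0..1}" using img s by blast
  have "(v has_real_derivative v' (a * s)) (at ((\<lambda>s. a * s) s) within (\<lambda>s. a * s) ` {0..R})"
    using DERIV_subset[OF dv[rule_format, OF as] img] by simp
  from DERIV_image_chain[OF this, of a]
  have "(v \<circ> (\<lambda>s. a * s) has_real_derivative v' (a * s) * a) (at s within {0..R})"
    by (auto intro!: derivative_eq_intros)
  then show ?thesis by (simp add: o_def)
qed

locale setting =
  fixes h h' f f' f'' gd gdd :: "real \<Rightarrow> real"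
    and t0 :: real
    and lam mu :: "nat \<Rightarrow> real"
    and u u' u'' :: "nat \<Rightarrow> real \<Rightarrow> real"
  assumes h_pos: "\<forall>r\<in>{0..1}. h r > 0"
    and h_C1: "\<forall>r\<in>{0..1}. (h has_real_derivative h' r) (at r within {0..1})"
    and f_nonneg: "\<forall>t\<ge>0. f t \<ge> 0"
    and f_C1: "\<forall>t\<ge>0. (f has_real_derivative f' t) (at t within {0..})"
    and f'_cont: "continuous_on {0..} f'"
    and t0: "t0 \<ge> 0"
    and f_pos: "\<forall>t\<ge>t0. f t > 0"
    and gd: "\<forall>t\<ge>t0. ((\<lambda>s. ln (f s)) has_real_derivative gd t) (at t within {t0..})"
    and gdd: "\<forall>t\<ge>t0. (gd has_real_derivative gdd t) (at t within {t0..})"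
    and H1: "H1 f gd gdd t0"
    and lam_pos: "\<forall>n. lam n > 0"
    and mu_pos: "\<forall>n. mu n > 0"
    and u_d1: "\<forall>n. \<forall>r\<in>{0..1}. (u n has_real_derivative u' n r) (at r within {0..1})"
    and u_d2: "\<forall>n. \<forall>r\<in>{0..1}. (u' n has_real_derivative u'' n r) (at r within {0..1})"
    and u''_cont: "\<forall>n. continuous_on {0..1} (u'' n)"
    and ode: "\<forall>n. \<forall>r\<in>{0<..<1}. - u'' n r - u' n r / r = lam n * h r * f (u n r)"
    and u_pos: "\<forall>n. \<forall>r\<in>{0<..<1}. u n r > 0"
    and bc: "\<forall>n. u n 0 = mu n \<and> u' n 0 = 0 \<and> u n 1 = 0"
    and mu_lim: "filterlim mu at_top sequentially"
begin

lemma f_cont: "continuous_on {0..} f"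
  by (rule deriv_cont[of _ _ f']) (use f_C1 in auto)

lemma h_cont: "continuous_on {0..1} h"
  by (rule deriv_cont[of _ _ h']) (use h_C1 in auto)

lemma u_cont: "continuous_on {0..1} (u n)"
  by (rule deriv_cont[of _ _ "u' n"]) (use u_d1 in auto)

lemma u'_cont: "continuous_on {0..1} (u' n)"
  by (rule deriv_cont[of _ _ "u'' n"]) (use u_d2 in auto)

lemma gd_cont: "continuous_on {t0..} gd"
  by (rule deriv_cont[of _ _ gdd]) (use gdd in auto)

lemma lnf_cont: "continuous_on {t0..} (\<lambda>s. ln (f s))"
  by (rule deriv_cont[of _ _ gd]) (use gd in auto)

lemma gd_at: "t0 < t \<Longrightarrow> ((\<lambda>s. ln (f s)) has_real_derivative gd t) (at t)"
  using gd[rule_format, of t] by (intro deriv_within_ge_at[of _ _ _ t0]) auto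

lemma gdd_at: "t0 < t \<Longrightarrow> (gd has_real_derivative gdd t) (at t)"
  using gdd[rule_format, of t] by (intro deriv_within_ge_at[of _ _ _ t0]) auto

lemma H1_facts:
  obtains q where "((\<lambda>t. (gd t)\<^sup>2 / (ln (f t) * gdd t)) \<longlongrightarrow> q) at_top" "q \<ge> 1"
    "\<forall>t\<ge>t0. gd t > 0 \<and> gdd t > 0"
  using H1 unfolding H1_def by force

lemma gd_pos: "t \<ge> t0 \<Longrightarrow> gd t > 0"
  using H1_facts by blast

lemma gdd_pos: "t \<ge> t0 \<Longrightarrow> gdd t > 0"
  using H1_facts by blast

lemma gd_mono: assumes "t0 \<le> x" "x \<le> y" shows "gd x \<le> gd y"
proof (rule DERIV_nonneg_imp_increasing_open[OF assms(2)])
  fix z assume "x < z" "z < y"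
  then show "\<exists>d. (gd has_real_derivative d) (at z) \<and> 0 \<le> d"
    using gdd_at[of z] gdd_pos[of z] assms by (intro exI[of _ "gdd z"]) auto
qed (rule continuous_on_subset[OF gd_cont], use assms in auto)

lemma lnf_mono: assumes "t0 \<le> x" "x \<le> y" shows "ln (f x) \<le> ln (f y)"
proof (rule DERIV_nonneg_imp_increasing_open[OF assms(2)])
  fix z assume "x < z" "z < y"
  then show "\<exists>d. ((\<lambda>s. ln (f s)) has_real_derivative d) (at z) \<and> 0 \<le> d"
    using gd_at[of z] gd_pos[of z] assms by (intro exI[of _ "gd z"]) auto
qed (rule continuous_on_subset[OF lnf_cont], use assms in auto)

lemma f_mono: assumes "t0 \<le> x" "x \<le> y" shows "f x \<le> f y"
  using lnf_mono[OF assms] f_pos assms by auto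

lemma f'_eq: assumes "t0 < t" shows "f' t = gd t * f t"
proof -
  have ft: "f t > 0" using f_pos assms by auto
  have "(f has_real_derivative f' t) (at t)"
    using f_C1 t0 assms by (intro deriv_within_ge_at[of _ _ _ 0]) auto
  then have "((\<lambda>s. ln (f s)) has_real_derivative 1 / f t * f' t) (at t)"
    using ft by (auto intro!: derivative_eq_intros)
  from DERIV_unique[OF this gd_at[OF assms]] show ?thesis using ft by (simp add: field_simps)
qed

definition "T1 = t0 + 1"

lemma T1: "t0 < T1" "0 < T1" using t0 by (auto simp: T1_def)

lemma lnf_lin: assumes "T1 \<le> t" shows "ln (f T1) + gd T1 * (t - T1) \<le> ln (f t)"
proof -
  have "(\<lambda>s. ln (f s) - gd T1 * s) T1 \<le> (\<lambda>s. ln (f s) - gd T1 * s) t"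
  proof (rule DERIV_nonneg_imp_increasing_open[OF assms])
    fix z assume z: "T1 < z" "z < t"
    have dz: "((\<lambda>s. gd T1 * s) has_real_derivative gd T1) (at z)" by (auto intro!: derivative_eq_intros)
    show "\<exists>d. ((\<lambda>s. ln (f s) - gd T1 * s) has_real_derivative d) (at z) \<and> 0 \<le> d"
      using DERIV_diff[OF gd_at[of z] dz] gd_mono[of T1 z] T1 z
      by (intro exI[of _ "gd z - gd T1"]) auto
  qed (intro continuous_intros continuous_on_subset[OF lnf_cont], use T1 in auto)
  then show ?thesis by (simp add: algebra_simps)
qed

lemma lnf_top: "filterlim (\<lambda>t. ln (f t)) at_top at_top"
proof -
  have "filterlim (\<lambda>t. ln (f T1) + gd T1 * (t - T1)) at_top at_top"
    using gd_pos[of T1] T1 by real_asymp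
  then show ?thesis
    by (rule filterlim_at_top_mono) (use lnf_lin in \<open>auto simp: eventually_at_top_linorder\<close>)
qed

lemma ratio0: "((\<lambda>t. gdd t / (gd t)\<^sup>2) \<longlongrightarrow> 0) at_top"
proof -
  obtain q where q: "((\<lambda>t. (gd t)\<^sup>2 / (ln (f t) * gdd t)) \<longlongrightarrow> q) at_top" "q \<ge> 1"
    using H1_facts by blast
  have "((\<lambda>t. inverse ((gd t)\<^sup>2 / (ln (f t) * gdd t))) \<longlongrightarrow> inverse q) at_top"
    using q by (intro tendsto_inverse) auto
  moreover have "((\<lambda>t. inverse (ln (f t))) \<longlongrightarrow> 0) at_top"
    using lnf_top by (rule tendsto_inverse_0_at_top)
  ultimately have L: "((\<lambda>t. inverse (ln (f t)) * inverse ((gd t)\<^sup>2 / (ln (f t) * gdd t))) \<longlongrightarrow> 0 * inverse q) at_top"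
    by (intro tendsto_mult)
  have E: "\<forall>\<^sub>F t in at_top. inverse (ln (f t)) * inverse ((gd t)\<^sup>2 / (ln (f t) * gdd t)) = gdd t / (gd t)\<^sup>2"
  proof -
    have "\<forall>\<^sub>F t in at_top. ln (f t) > 0" using lnf_top by (simp add: filterlim_at_top_dense)
    moreover have "\<forall>\<^sub>F t in at_top. t \<ge> t0" by (simp add: eventually_ge_at_top)
    ultimately show ?thesis
    proof eventually_elim
      case (elim t) then show ?case using gd_pos[of t] gdd_pos[of t] by (simp add: field_simps)
    qed
  qed
  show ?thesis using Lim_transform_eventually[OF L E] by simp
qed

lemma h0: "h 0 > 0" using h_pos by auto

lemma u'_at: "0 < r \<Longrightarrow> r < 1 \<Longrightarrow> (u' n has_real_derivative u'' n r) (at r)"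
  using u_d2 by (intro deriv_within_Icc_at[of _ _ _ 0 1]) auto

lemma u_at: "0 < r \<Longrightarrow> r < 1 \<Longrightarrow> (u n has_real_derivative u' n r) (at r)"
  using u_d1 by (intro deriv_within_Icc_at[of _ _ _ 0 1]) auto

lemma phi_deriv:
  assumes "0 < x" "x < 1"
  shows "((\<lambda>r. r * u' n r) has_real_derivative - (lam n * h x * f (u n x) * x)) (at x)"
proof -
  have "((\<lambda>r. r * u' n r) has_real_derivative 1 * u' n x + x * u'' n x) (at x)"
    using u'_at[OF assms] by (auto intro!: derivative_eq_intros)
  moreover have "1 * u' n x + x * u'' n x = - (lam n * h x * f (u n x) * x)"
    using ode[rule_format, of x n] assms by (simp add: field_simps)
  ultimately show ?thesis by simp
qed

lemma phi_cont: "continuous_on {0..1} (\<lambda>r. r * u' n r)"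
  by (intro continuous_intros u'_cont)

lemma fu_nonneg: "r \<in> {0..1} \<Longrightarrow> f (u n r) \<ge> 0"
proof -
  assume r: "r \<in> {0..1}"
  have "u n r \<ge> 0"
  proof (cases "r = 0 \<or> r = 1")
    case True then show ?thesis using bc mu_pos by (metis order.refl less_imp_le)
  next
    case False then show ?thesis using u_pos r by (auto intro: less_imp_le)
  qed
  then show ?thesis using f_nonneg by auto
qed

lemma u'_nonpos: assumes r: "r \<in> {0..1}" shows "u' n r \<le> 0"
proof (cases "r = 0")
  case True then show ?thesis using bc by simp
next
  case False
  then have rp: "0 < r" using r by auto
  have "(\<lambda>r. r * u' n r) r \<le> (\<lambda>r. r * u' n r) 0"
  proof (rule DERIV_nonpos_imp_decreasing_open[of 0 r])
    fix x assume x: "0 < x" "x < r"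
    have hx: "0 < h x" using h_pos x r by auto
    have "lam n * h x * f (u n x) * x \<ge> 0"
      using lam_pos[rule_format, of n] hx fu_nonneg[of x n] r x by (intro mult_nonneg_nonneg) auto
    then show "\<exists>y. ((\<lambda>r. r * u' n r) has_real_derivative y) (at x) \<and> y \<le> 0"
      using phi_deriv[of x n] x r by (intro exI[of _ "- (lam n * h x * f (u n x) * x)"]) auto
  qed (use rp r in \<open>auto intro: continuous_on_subset[OF phi_cont]\<close>)
  then have "r * u' n r \<le> 0" by simp
  then show ?thesis using rp by (simp add: mult_le_0_iff)
qed

lemma u_le_mu: assumes r: "r \<in> {0..1}" shows "u n r \<le> mu n"
proof -
  have "u n r \<le> u n 0"
  proof (rule DERIV_nonpos_imp_decreasing_open[of 0 r])
    fix x assume x: "0 < x" "x < r"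
    then show "\<exists>y. (u n has_real_derivative y) (at x) \<and> y \<le> 0"
      using u_at[of x n] u'_nonpos[of x n] r by (intro exI[of _ "u' n x"]) auto
  qed (use r in \<open>auto intro: continuous_on_subset[OF u_cont]\<close>)
  then show ?thesis using bc by simp
qed

lemma u_nonneg: assumes r: "r \<in> {0..1}" shows "0 \<le> u n r"
proof (cases "r = 0 \<or> r = 1")
  case True then show ?thesis using bc mu_pos by (metis order.refl less_imp_le)
next
  case False then show ?thesis using u_pos r by (auto intro: less_imp_le)
qed

lemma u_bounds:
  assumes H: "\<forall>r\<in>{0..1}. h r \<le> H" and Fb: "\<forall>r\<in>{0..1}. f (u n r) \<le> F"
    and r: "r \<in> {0..1}"
  shows "\<bar>u' n r\<bar> \<le> lam n * H * F * r / 2" "mu n - u n r \<le> lam n * H * F * r^2 / 4"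
proof -
  have u'b: "\<bar>u' n t\<bar> \<le> lam n * H * F * t / 2" if t: "t \<in> {0..1}" for t
  proof (cases "t = 0")
    case True then show ?thesis using bc by simp
  next
    case False
    then have tp: "0 < t" using t by auto
    have "\<bar>(\<lambda>r. r * u' n r) t\<bar> \<le> (lam n * H * F) * t^2 / 2"
    proof (rule mvt_quad[where \<phi>' = "\<lambda>x. - (lam n * h x * f (u n x) * x)"])
      show "continuous_on {0..t} (\<lambda>r. r * u' n r)"
        using t by (auto intro: continuous_on_subset[OF phi_cont])
    next
      fix x assume x: "0 < x" "x < t"
      then show "((\<lambda>r. r * u' n r) has_real_derivative - (lam n * h x * f (u n x) * x)) (at x)"
        using phi_deriv t by auto
      have hx: "0 < h x" "h x \<le> H" "f (u n x) \<le> F" "0 \<le> f (u n x)" "0 < lam n"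
        using h_pos x t H Fb fu_nonneg[of x n] lam_pos by auto
      have "lam n * h x * f (u n x) * x \<le> lam n * H * F * x"
        using x hx by (intro mult_right_mono mult_mono mult_left_mono) auto
      moreover have "lam n * h x * f (u n x) * x \<ge> 0"
        using hx x by (intro mult_nonneg_nonneg) auto
      ultimately show "\<bar>- (lam n * h x * f (u n x) * x)\<bar> \<le> lam n * H * F * x" by simp
    qed (use tp in auto)
    then have "t * \<bar>u' n t\<bar> \<le> t * (lam n * H * F * t / 2)"
      using tp by (simp add: abs_mult power2_eq_square)
    then show ?thesis using tp by (simp add: mult_le_cancel_left_pos)
  qed
  then show "\<bar>u' n r\<bar> \<le> lam n * H * F * r / 2" using r by simp
  have "\<bar>(\<lambda>r. u n r - mu n) r\<bar> \<le> (lam n * H * F / 2) * r^2 / 2"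
  proof (rule mvt_quad[where \<phi>' = "u' n"])
    show "continuous_on {0..r} (\<lambda>r. u n r - mu n)"
      using r by (auto intro!: continuous_intros intro: continuous_on_subset[OF u_cont])
  next
    fix x assume x: "0 < x" "x < r"
    then show "((\<lambda>r. u n r - mu n) has_real_derivative u' n x) (at x)"
      using u_at[of x n] r by (auto intro!: derivative_eq_intros)
    show "\<bar>u' n x\<bar> \<le> lam n * H * F / 2 * x" using u'b[of x] x r by auto
  qed (use r bc in auto)
  moreover have "lam n * H * F / 2 * r^2 / 2 = lam n * H * F * r^2/4" by simp
  ultimately show "mu n - u n r \<le> lam n * H * F * r^2 / 4" by linarith
qed

lemma A_cont: "continuous_on {0..1} (\<lambda>r. lam n * h r * f (u n r) * r)"
proof -
  have "continuous_on {0..1} (\<lambda>r. f (u n r))"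
    by (rule continuous_on_compose2[OF f_cont u_cont]) (use u_nonneg in auto)
  then show ?thesis by (intro continuous_intros h_cont)
qed

lemma B_cont: "continuous_on {0..1} (\<lambda>r. lam n * h r * f' (u n r) * r)"
proof -
  have "continuous_on {0..1} (\<lambda>r. f' (u n r))"
    by (rule continuous_on_compose2[OF f'_cont u_cont]) (use u_nonneg in auto)
  then show ?thesis by (intro continuous_intros h_cont)
qed

lemma u_integral:
  assumes "0 < \<rho>" "\<rho> \<le> 1"
  shows "((\<lambda>r. lam n * h r * f (u n r) * r) has_integral - (\<rho> * u' n \<rho>)) {0..\<rho>}"
proof -
  have "((\<lambda>r. - (lam n * h r * f (u n r) * r)) has_integral (\<rho> * u' n \<rho> - 0 * u' n 0)) {0..\<rho>}"
  proof (rule fundamental_theorem_of_calculus_interior)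
    show "continuous_on {0..\<rho>} (\<lambda>r. r * u' n r)"
      using assms by (auto intro: continuous_on_subset[OF phi_cont])
    fix x assume "x \<in> {0<..<\<rho>}"
    then show "((\<lambda>r. r * u' n r) has_vector_derivative - (lam n * h x * f (u n x) * x)) (at x)"
      using phi_deriv[of x n] assms by (simp add: has_real_derivative_iff_has_vector_derivative)
  qed (use assms in auto)
  from has_integral_neg[OF this] show ?thesis by simp
qed

definition "Hm = Sup (h ` {0..1})"
definition "K0 = Sup (f ` {0..T1})"

lemma h_le_Hm: "r \<in> {0..1} \<Longrightarrow> h r \<le> Hm"
  unfolding Hm_def
  by (intro cSUP_upper bounded_imp_bdd_above compact_imp_bounded compact_continuous_image h_cont) auto

lemma Hm_pos: "Hm > 0" using h_le_Hm[of 0] h0 by auto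

lemma f_le_K0: "t \<in> {0..T1} \<Longrightarrow> f t \<le> K0"
  unfolding K0_def
  by (intro cSUP_upper bounded_imp_bdd_above compact_imp_bounded compact_continuous_image
      continuous_on_subset[OF f_cont]) auto

lemma f_top: "\<forall>\<^sub>F t in at_top. f t \<ge> K0"
proof -
  have "\<forall>\<^sub>F t in at_top. ln (f t) \<ge> ln (max K0 1)" using lnf_top by (simp add: filterlim_at_top)
  moreover have "\<forall>\<^sub>F t in at_top. t \<ge> t0" by (simp add: eventually_ge_at_top)
  ultimately show ?thesis
  proof eventually_elim
    case (elim t)
    then have "f t > 0" using f_pos by auto
    with elim have "max K0 1 \<le> f t" by (subst (asm) ln_le_cancel_iff) auto
    then show ?case by simp
  qed
qed

definition "good n \<longleftrightarrow> mu n \<ge> T1 \<and> f (mu n) \<ge> K0"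

lemma ev_good: "eventually good sequentially"
proof -
  have "\<forall>\<^sub>F n in sequentially. mu n \<ge> T1" using mu_lim by (simp add: filterlim_at_top)
  moreover have "\<forall>\<^sub>F n in sequentially. f (mu n) \<ge> K0"
    by (rule eventually_compose_filterlim[OF f_top mu_lim])
  ultimately show ?thesis unfolding good_def by eventually_elim auto
qed

lemma good_F: assumes "good n" "r \<in> {0..1}" shows "f (u n r) \<le> f (mu n)"
proof (cases "u n r \<le> T1")
  case True then show ?thesis using f_le_K0[of "u n r"] u_nonneg[OF assms(2)] assms(1) by (auto simp: good_def)
next
  case False then show ?thesis using f_mono[of "u n r" "mu n"] u_le_mu[OF assms(2)] T1 by auto
qed

lemma good_mu: "good n \<Longrightarrow> t0 < mu n" "good n \<Longrightarrow> f (mu n) > 0" "good n \<Longrightarrow> gd (mu n) \<ge> gd T1"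
  using T1 f_pos gd_mono[of T1 "mu n"] by (auto simp: good_def)

definition "a n = sqrt (1 / (lam n * h 0 * f' (mu n)))"

lemma a_facts:
  assumes g: "good n"
  shows "0 < a n" "gd (mu n) * (a n)^2 * lam n * h 0 * f (mu n) = 1"
    "(a n)^2 \<le> Hm / (4 * h 0 * gd T1 * mu n)"
proof -
  have f': "f' (mu n) = gd (mu n) * f (mu n)" using f'_eq good_mu[OF g] by auto
  have pos: "0 < gd (mu n)" "0 < f (mu n)" "0 < lam n" "0 < h 0" "0 < gd T1"
    using gd_pos[of "mu n"] good_mu[OF g] lam_pos h0 gd_pos[of T1] T1 by auto
  have P: "0 < lam n * h 0 * f' (mu n)" using pos f' by simp
  then show "0 < a n" by (simp add: a_def)
  have sq: "(a n)^2 = 1 / (lam n * h 0 * f' (mu n))" using P by (simp add: a_def)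
  then show "gd (mu n) * (a n)^2 * lam n * h 0 * f (mu n) = 1" using pos f' by (simp add: field_simps)
  have "mu n - u n 1 \<le> lam n * Hm * f (mu n) * 1^2 / 4"
    by (rule u_bounds(2)) (use h_le_Hm good_F[OF g] in auto)
  then have mu_le: "4 * mu n \<le> lam n * Hm * f (mu n)" using bc by simp
  have "4 * h 0 * gd T1 * mu n \<le> h 0 * gd T1 * (lam n * Hm * f (mu n))"
    using mu_le pos by (simp add: mult_left_mono)
  also have "\<dots> \<le> h 0 * gd (mu n) * (lam n * Hm * f (mu n))"
    using pos good_mu(3)[OF g] Hm_pos by (intro mult_right_mono mult_left_mono) auto
  also have "\<dots> = Hm * (lam n * h 0 * f' (mu n))" using f' by (simp add: algebra_simps)
  finally have "4 * h 0 * gd T1 * mu n \<le> Hm * (lam n * h 0 * f' (mu n))" .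
  moreover have "0 < 4 * h 0 * gd T1 * mu n" using pos good_mu(1)[OF g] T1 t0 by auto
  moreover have "0 < Hm * (lam n * h 0 * f' (mu n)) * (4 * h 0 * gd T1 * mu n)"
    using Hm_pos P \<open>0 < 4 * h 0 * gd T1 * mu n\<close> by simp
  ultimately have "Hm / (Hm * (lam n * h 0 * f' (mu n))) \<le> Hm / (4 * h 0 * gd T1 * mu n)"
    using Hm_pos by (intro divide_left_mono) auto
  then show "(a n)^2 \<le> Hm / (4 * h 0 * gd T1 * mu n)" using sq P Hm_pos by simp
qed

lemma a_lim: "a \<longlonglongrightarrow> 0"
proof (rule tendsto_sandwich[of "\<lambda>n. 0" _ _ "\<lambda>n. sqrt (Hm / (4 * h 0 * gd T1) * inverse (mu n))"])
  show "\<forall>\<^sub>F n in sequentially. 0 \<le> a n" using ev_good by eventually_elim (use a_facts(1) in force)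
  show "\<forall>\<^sub>F n in sequentially. a n \<le> sqrt (Hm / (4 * h 0 * gd T1) * inverse (mu n))"
    using ev_good
  proof eventually_elim
    case (elim n)
    have "a n \<le> sqrt (Hm / (4 * h 0 * gd T1 * mu n))" using a_facts(3)[OF elim] by (rule real_le_rsqrt)
    also have "Hm / (4 * h 0 * gd T1 * mu n) = Hm / (4 * h 0 * gd T1) * inverse (mu n)"
      by (simp add: field_simps)
    finally show ?case .
  qed
  have "((\<lambda>n. inverse (mu n)) \<longlongrightarrow> 0) sequentially" by (rule tendsto_inverse_0_at_top[OF mu_lim])
  then have "((\<lambda>n. Hm / (4 * h 0 * gd T1) * inverse (mu n)) \<longlongrightarrow> 0) sequentially"
    by (rule tendsto_mult_right_zero)
  then show "(\<lambda>n. sqrt (Hm / (4 * h 0 * gd T1) * inverse (mu n))) \<longlonglongrightarrow> 0"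
    using tendsto_real_sqrt by fastforce
qed simp

definition "Z n s = gd (mu n) * (u n (a n * s) - mu n)"
definition "Z1 n s = gd (mu n) * a n * u' n (a n * s)"
definition "Z2 n s = gd (mu n) * (a n)^2 * u'' n (a n * s)"
definition "G n s = gd (mu n) * (a n)^2 * lam n * h (a n * s) * f (u n (a n * s))"

lemma Z_derivs:
  assumes "0 < a n" "a n * R \<le> 1" "s \<in> {0..R}"
  shows "(Z n has_real_derivative Z1 n s) (at s within {0..R})"
    "(Z1 n has_real_derivative Z2 n s) (at s within {0..R})"
proof -
  have d: "((\<lambda>s. u n (a n * s)) has_real_derivative u' n (a n * s) * a n) (at s within {0..R})"
    by (rule deriv_scaled) (use assms u_d1 in auto)
  from DERIV_cmult[OF DERIV_diff[OF d DERIV_const[of "mu n"]], of "gd (mu n)"]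
  show "(Z n has_real_derivative Z1 n s) (at s within {0..R})"
    unfolding Z_def[abs_def] Z1_def by (simp add: algebra_simps)
  have d2: "((\<lambda>s. u' n (a n * s)) has_real_derivative u'' n (a n * s) * a n) (at s within {0..R})"
    by (rule deriv_scaled) (use assms u_d2 in auto)
  from DERIV_cmult[OF d2, of "gd (mu n) * a n"]
  show "(Z1 n has_real_derivative Z2 n s) (at s within {0..R})"
    unfolding Z1_def[abs_def] Z2_def by (simp add: algebra_simps power2_eq_square)
qed

lemma Z2_cont:
  assumes "0 < a n" "a n * R \<le> 1"
  shows "continuous_on {0..R} (Z2 n)"
proof -
  have "continuous_on {0..R} (\<lambda>s. u'' n (a n * s))"
  proof (rule continuous_on_compose2[OF u''_cont[rule_format, of n]])
    show "continuous_on {0..R} ((*) (a n))" by (intro continuous_intros)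
    show "(*) (a n) ` {0..R} \<subseteq> {0..1}"
    proof
      fix y assume "y \<in> (*) (a n) ` {0..R}"
      then obtain x where x: "x \<in> {0..R}" "y = a n * x" by auto
      have "a n * x \<le> a n * R" using x assms by (intro mult_left_mono) auto
      then have "a n * x \<le> 1" using assms by linarith
      then show "y \<in> {0..1}" using x assms by auto
    qed
  qed
  then show ?thesis unfolding Z2_def[abs_def] by (intro continuous_intros)
qed

lemma Z_ode:
  assumes "0 < a n" "a n * R < 1" "0 < s" "s \<le> R"
  shows "Z2 n s = - G n s - Z1 n s / s"
proof -
  have "a n * s \<le> a n * R" using assms by (intro mult_left_mono) auto
  then have "a n * s < 1" using assms(2) by linarith
  then have r: "a n * s \<in> {0<..<1}" using assms by auto
  have "- u'' n (a n * s) - u' n (a n * s) / (a n * s) = lam n * h (a n * s) * f (u n (a n * s))"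
    using ode r by blast
  then have E: "u'' n (a n * s) = - lam n * h (a n * s) * f (u n (a n * s)) - u' n (a n * s) / (a n * s)"
    by (simp add: algebra_simps)
  show ?thesis unfolding Z2_def E unfolding G_def Z1_def using assms
    by (simp add: field_simps power2_eq_square)
qed

lemma Z_0: "Z n 0 = 0" "Z1 n 0 = 0"
  using bc by (auto simp: Z_def Z1_def)

end

definition zlA :: "real \<Rightarrow> real" where "zlA s = ln (64 / (8 + s^2)^2)"
definition zlB :: "real \<Rightarrow> real" where "zlB s = - 4 * s / (8 + s^2)"
definition zlC :: "real \<Rightarrow> real" where "zlC s = (4 * s^2 - 32) / (8 + s^2)^2"

lemma zlB_aux: "0 < 8 + s^2 \<Longrightarrow> ((\<lambda>s::real. - 4 * s / (8 + s^2)) has_real_derivative (4 * s^2 - 32) / (8 + s^2)^2) (at s)"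
  apply (rule derivative_eq_intros refl | simp)+
  apply (simp add: divide_simps)
  apply (simp add: algebra_simps power2_eq_square)
  done

lemma zlA_facts:
  fixes s :: real
  shows "(zlA has_real_derivative zlB s) (at s)" "(zlB has_real_derivative zlC s) (at s)"
    "exp (zlA s) = 64 / (8 + s^2)^2" "zlA s \<le> 0" "zlA 0 = 0" "zlB 0 = 0"
    "s \<noteq> 0 \<Longrightarrow> zlC s = - exp (zlA s) - zlB s / s"
    "continuous_on S zlC"
proof -
  have p: "8 + s^2 > 0" by (simp add: add_pos_nonneg)
  have pp: "\<And>x::real. 8 + x^2 > 0" by (simp add: add_pos_nonneg)
  have "zlA = (\<lambda>s. ln 64 - 2 * ln (8 + s^2))"
  proof
    fix x :: real
    show "zlA x = ln 64 - 2 * ln (8 + x^2)" unfolding zlA_def using pp[of x]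
      by (simp add: ln_div ln_realpow)
  qed
  moreover have "((\<lambda>s. ln 64 - 2 * ln (8 + s^2)) has_real_derivative zlB s) (at s)" unfolding zlB_def
    using p by (auto intro!: derivative_eq_intros simp: field_simps power2_eq_square)
  ultimately show "(zlA has_real_derivative zlB s) (at s)" by simp
  show "(zlB has_real_derivative zlC s) (at s)" unfolding zlB_def[abs_def] zlC_def
    using zlB_aux[OF p] .
  show e: "exp (zlA s) = 64 / (8 + s^2)^2" unfolding zlA_def using p by simp
  have "64 \<le> (8 + s^2)^2"
  proof -
    have "8 \<le> 8 + s^2" by simp
    then have "8^2 \<le> (8 + s^2)^2" by (rule power_mono) simp
    then show ?thesis by simp
  qed
  then have "64 / (8 + s^2)^2 \<le> 1" using p by simp
  then show "zlA s \<le> 0" using e by (metis exp_le_one_iff)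
  show "zlA 0 = 0" "zlB 0 = 0" by (simp_all add: zlA_def zlB_def)
  show "s \<noteq> 0 \<Longrightarrow> zlC s = - exp (zlA s) - zlB s / s"
  proof -
    assume s0: "s \<noteq> 0"
    define D where "D = 8 + s^2"
    have D: "0 < D" using p by (simp add: D_def)
    have 1: "(- 4 * s / D) / s = - 4 / D" using s0 by simp
    have 2: "- 64 / D^2 - (- 4 / D) = (4 * D - 64) / D^2" using D by (simp add: field_simps power2_eq_square)
    have 3: "4 * D - 64 = 4 * s^2 - 32" by (simp add: D_def)
    have 4: "(4 * s^2 - 32) / D^2 = - 64 / D^2 - (- 4 / D)" unfolding 3[symmetric] 2 ..
    show ?thesis unfolding e zlC_def zlB_def D_def[symmetric] 1 4 by simp
  qed
  have "\<And>x::real. 8 + x^2 \<noteq> 0" by (metis add_pos_nonneg zero_le_power2 less_numeral_extra(3) zero_less_numeral)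
  then show "continuous_on S zlC" unfolding zlC_def[abs_def] by (intro continuous_intros) auto
qed



lemma approx_lim:
  fixes x y b :: "nat \<Rightarrow> real"
  assumes xb: "\<And>n. \<bar>x n - y n\<bar> \<le> b n" and b: "b \<longlonglongrightarrow> 0" and y: "y \<longlonglongrightarrow> L"
  shows "x \<longlonglongrightarrow> L"
proof -
  have "(\<lambda>n. x n - y n) \<longlonglongrightarrow> 0"
  proof (rule tendsto_sandwich[of "\<lambda>n. - b n" _ _ b])
    have "- b n \<le> x n - y n" "x n - y n \<le> b n" for n using xb[of n] by (auto simp: abs_le_iff)
    then show "\<forall>\<^sub>F n in sequentially. - b n \<le> x n - y n" "\<forall>\<^sub>F n in sequentially. x n - y n \<le> b n"
      by auto
    show "(\<lambda>n. - b n) \<longlonglongrightarrow> 0" using tendsto_minus[OF b] by simp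
  qed (rule b)
  from tendsto_add[OF this y] show ?thesis by simp
qed

lemma inv_lim: "(\<lambda>k. 1 / (real k + 1)) \<longlonglongrightarrow> 0" by real_asymp

lemma four_lim: "(\<lambda>k. 4 * (real k + 1)^2 / (8 + (real k + 1)^2)) \<longlonglongrightarrow> 4" by real_asymp

lemma top_lim: "filterlim (\<lambda>k. real k + 1) at_top sequentially" by real_asymp



context setting
begin

lemma key:
  assumes R: "0 < R" and e: "0 < e"
  shows "\<forall>\<^sub>F n in sequentially. 0 < a n \<and> a n * R < 1 \<and> a n * R \<le> e \<and>
     \<bar>C2_norm {0..R} (\<lambda>r. Z n r - zlA r)\<bar> \<le> e \<and>
     \<bar>gd (mu n) * integral {0..a n * R} (\<lambda>r. lam n * h r * f (u n r) * r) - 4 * R^2 / (8 + R^2)\<bar> \<le> e \<and>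
     \<bar>integral {0..a n * R} (\<lambda>r. lam n * h r * f' (u n r) * r) - 4 * R^2 / (8 + R^2)\<bar> \<le> e \<and>
     \<bar>u n (a n * R) / mu n - 1\<bar> \<le> e"
proof -
  define Q where "Q = Hm / h 0"
  define M where "M = Q * R^2 / 4"
  define Kc where "Kc = (1 + 2 * exp (R^2)) * (R + 2)"
  define c1 where "c1 = gd T1"
  have Q: "0 < Q" using Hm_pos h0 by (simp add: Q_def)
  have M: "0 < M" using Q R by (simp add: M_def)
  have Kc: "0 < Kc" using R by (simp add: Kc_def add_pos_pos)
  have c1: "0 < c1" using gd_pos[of T1] T1 by (simp add: c1_def)
  define \<eta> where "\<eta> = e / (2 * (3 + R) * Kc)"
  have \<eta>: "0 < \<eta>" using e R Kc by (simp add: \<eta>_def)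
  have \<eta>1: "3 * (Kc * \<eta>) \<le> e / 2" "R * (Kc * \<eta>) \<le> e / 2"
    using e R Kc mult_pos_pos[of e R] unfolding \<eta>_def by (simp_all add: divide_simps)
  define \<epsilon>1 where "\<epsilon>1 = min (\<eta> / (2 * (M + 1))) (e / (Q * R^2 + 1))"
  have QR1: "0 < Q * R^2 + 1" using Q by (intro add_nonneg_pos) auto
  have \<epsilon>1: "0 < \<epsilon>1" using \<eta> e M Q QR1 by (simp add: \<epsilon>1_def)
  have \<epsilon>1a: "M * \<epsilon>1 \<le> \<eta> / 2"
  proof -
    have "M * \<epsilon>1 \<le> M * (\<eta> / (2 * (M + 1)))" using M unfolding \<epsilon>1_def by (intro mult_left_mono) auto
    also have "\<dots> \<le> \<eta> / 2" using M \<eta> by (simp add: field_simps)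
    finally show ?thesis .
  qed
  have \<epsilon>1b: "\<epsilon>1 * (Q * R^2 / 2) \<le> e / 2"
  proof -
    have QR: "0 \<le> Q * R^2" using Q by simp
    have "\<epsilon>1 * (Q * R^2 / 2) \<le> e / (Q * R^2 + 1) * (Q * R^2 / 2)"
      using QR by (intro mult_right_mono) (auto simp: \<epsilon>1_def)
    also have "\<dots> \<le> e / 2" using QR e by (simp add: field_simps)
    finally show ?thesis .
  qed
  define \<eta>' where "\<eta>' = \<epsilon>1 / (M + 1)"
  have \<eta>': "0 < \<eta>'" "M * \<eta>' \<le> \<epsilon>1" using \<epsilon>1 M by (simp_all add: \<eta>'_def field_simps)
  obtain \<delta> where \<delta>: "0 < \<delta>" "\<forall>r\<in>{0..1}. r < \<delta> \<longrightarrow> \<bar>h r - h 0\<bar> < \<eta> / 2 * h 0"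
  proof -
    have "\<exists>d>0. \<forall>x'\<in>{0..1}. dist x' 0 < d \<longrightarrow> dist (h x') (h 0) < \<eta> / 2 * h 0"
      using h_cont \<eta> h0 unfolding continuous_on_iff by (metis atLeastAtMost_iff half_gt_zero mult_pos_pos order.refl zero_le_one)
    then show ?thesis using that by (auto simp: dist_real_def)
  qed
  obtain Tg where Tg: "\<forall>t\<ge>Tg. gdd t / (gd t)^2 \<le> \<eta>'"
  proof -
    have "\<forall>\<^sub>F t in at_top. gdd t / (gd t)^2 < \<eta>'" using order_tendstoD(2)[OF ratio0 \<eta>'(1)] .
    then obtain N where "\<forall>t\<ge>N. gdd t / (gd t)^2 < \<eta>'" by (auto simp: eventually_at_top_linorder)
    then show ?thesis using that[of N] by (meson less_imp_le)
  qed
  have ev1: "\<forall>\<^sub>F n in sequentially. mu n \<ge> max T1 Tg + M / c1 + M / (c1 * e)"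
    using mu_lim by (simp add: filterlim_at_top)
  have ev2: "\<forall>\<^sub>F n in sequentially. a n < min (min 1 \<delta>) e / R"
    using order_tendstoD(2)[OF a_lim] R \<delta> e by simp
  show ?thesis using ev_good ev1 ev2
  proof eventually_elim
    case (elim n)
    note g = elim(1)
    define c where "c = gd (mu n)"
    define A where "A = a n"
    define \<mu> where "\<mu> = mu n"
    have A: "0 < A" using a_facts(1)[OF g] by (simp add: A_def)
    have c: "c1 \<le> c" "0 < c" using good_mu(3)[OF g] c1 by (auto simp: c_def c1_def)
    have key1: "c * A^2 * lam n * h 0 * f \<mu> = 1" using a_facts(2)[OF g] by (simp add: c_def A_def \<mu>_def)
    have AR: "A * R < min (min 1 \<delta>) e" using elim(3) R by (simp add: A_def pos_less_divide_eq mult.commute)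
    then have AR1: "A * R < 1" "A * R < \<delta>" "A * R \<le> e" by auto
    have mu_big: "\<mu> \<ge> max T1 Tg + M / c1 + M / (c1 * e)" using elim(2) by (simp add: \<mu>_def)
    have Mc: "M / c \<le> M / c1" using c c1 M by (simp add: divide_left_mono)
    have Mce: "0 \<le> M / (c1 * e)" using M c1 e by simp
    have fmu: "0 < f \<mu>" using good_mu(2)[OF g] by (simp add: \<mu>_def)
    have lampos: "0 < lam n" using lam_pos by simp
    define \<tau> where "\<tau> = \<mu> - M / c"
    have \<tau>: "\<tau> \<ge> T1" "\<tau> \<ge> Tg" "\<tau> < \<mu>" using mu_big Mc Mce M c by (auto simp: \<tau>_def)
    have cAl: "c * A^2 * lam n * f \<mu> = 1 / h 0" using key1 h0 by (simp add: field_simps)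
    have ub: "c * (\<mu> - u n r) \<le> M" "u n r \<le> \<mu>" "\<tau> \<le> u n r" "c * \<bar>u' n r\<bar> * A \<le> Q * R / 2"
      if r: "r \<in> {0..A * R}" for r
    proof -
      have r1: "r \<in> {0..1}" using r AR1 by auto
      have "\<mu> - u n r \<le> lam n * Hm * f \<mu> * r^2 / 4"
        unfolding \<mu>_def by (rule u_bounds(2)[OF _ _ r1]) (use h_le_Hm good_F[OF g] in auto)
      also have "\<dots> \<le> lam n * Hm * f \<mu> * (A * R)^2 / 4"
        using r lampos Hm_pos fmu by (intro divide_right_mono mult_left_mono power_mono) auto
      finally have "c * (\<mu> - u n r) \<le> c * (lam n * Hm * f \<mu> * (A * R)^2 / 4)"
        using c by (simp add: mult_left_mono)
      also have "\<dots> = (c * A^2 * lam n * f \<mu>) * Hm * R^2 / 4" by (simp add: algebra_simps power2_eq_square)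
      also have "\<dots> = M" unfolding cAl by (simp add: M_def Q_def)
      finally show um: "c * (\<mu> - u n r) \<le> M" .
      show "u n r \<le> \<mu>" using u_le_mu[OF r1] by (simp add: \<mu>_def)
      from um show "\<tau> \<le> u n r" using c by (simp add: \<tau>_def field_simps)
      have "\<bar>u' n r\<bar> \<le> lam n * Hm * f \<mu> * r / 2"
        unfolding \<mu>_def by (rule u_bounds(1)[OF _ _ r1]) (use h_le_Hm good_F[OF g] in auto)
      also have "\<dots> \<le> lam n * Hm * f \<mu> * (A * R) / 2"
        using r lampos Hm_pos fmu by (intro divide_right_mono mult_left_mono) auto
      finally have u'le: "\<bar>u' n r\<bar> \<le> lam n * Hm * f \<mu> * (A * R) / 2" .
      have "c * \<bar>u' n r\<bar> * A \<le> c * (lam n * Hm * f \<mu> * (A * R) / 2) * A"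
        using c A u'le by (intro mult_right_mono mult_left_mono) auto
      also have "\<dots> = (c * A^2 * lam n * f \<mu>) * Hm * R / 2" by (simp add: algebra_simps power2_eq_square)
      also have "\<dots> = Q * R / 2" unfolding cAl by (simp add: Q_def)
      finally show "c * \<bar>u' n r\<bar> * A \<le> Q * R / 2" .
    qed
    have gd\<tau>: "gd \<tau> \<le> c" "0 < gd \<tau>" using gd_mono[of \<tau> \<mu>] \<tau> T1 gd_pos[of \<tau>] by (auto simp: c_def \<mu>_def)
    have \<epsilon>': "c - gd \<tau> \<le> M * \<eta>' * c"
    proof -
      obtain \<xi> where \<xi>: "\<tau> < \<xi>" "\<xi> < \<mu>" "gd \<mu> - gd \<tau> = (\<mu> - \<tau>) * gdd \<xi>"
        using MVT2[OF \<tau>(3), of gd gdd] gdd_at \<tau> T1 by force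
      have gx: "0 < gd \<xi>" "gd \<xi> \<le> c" using gd_pos[of \<xi>] gd_mono[of \<xi> \<mu>] \<xi> \<tau> T1 by (auto simp: c_def \<mu>_def)
      have "gdd \<xi> / (gd \<xi>)^2 \<le> \<eta>'" using Tg \<xi> \<tau> by auto
      then have "gdd \<xi> \<le> \<eta>' * (gd \<xi>)^2" using gx by (simp add: field_simps)
      also have "\<dots> \<le> \<eta>' * c^2" using gx \<eta>' by (intro mult_left_mono power_mono) auto
      finally have gdd\<xi>: "gdd \<xi> \<le> \<eta>' * c^2" .
      have "c - gd \<tau> = (M / c) * gdd \<xi>" using \<xi>(3) by (simp add: c_def \<tau>_def \<mu>_def)
      also have "\<dots> \<le> (M / c) * (\<eta>' * c^2)" using M c by (intro mult_left_mono gdd\<xi>) auto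
      also have "\<dots> = M * \<eta>' * c" using c by (simp add: power2_eq_square)
      finally show ?thesis .
    qed
    have logest: "0 \<le> ln (f v) - ln (f \<mu>) + c * (\<mu> - v) \<and> ln (f v) - ln (f \<mu>) + c * (\<mu> - v) \<le> (\<mu> - v) * (c - gd \<tau>)"
      if v: "\<tau> \<le> v" "v \<le> \<mu>" for v
    proof (cases "v = \<mu>")
      case True then show ?thesis by simp
    next
      case False
      then have v': "v < \<mu>" using v by simp
      obtain \<xi> where \<xi>: "v < \<xi>" "\<xi> < \<mu>" "ln (f \<mu>) - ln (f v) = (\<mu> - v) * gd \<xi>"
        using MVT2[OF v', of "\<lambda>s. ln (f s)" gd] gd_at v \<tau> T1 by force
      have gx: "gd \<tau> \<le> gd \<xi>" "gd \<xi> \<le> c" using gd_mono[of \<tau> \<xi>] gd_mono[of \<xi> \<mu>] \<xi> v \<tau> T1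
        by (auto simp: c_def \<mu>_def)
      have "ln (f v) - ln (f \<mu>) + c * (\<mu> - v) = (\<mu> - v) * (c - gd \<xi>)" using \<xi>(3) by (simp add: algebra_simps)
      then show ?thesis using gx v' by (auto intro!: mult_left_mono mult_nonneg_nonneg)
    qed
    have GZ: "\<bar>G n s - exp (Z n s)\<bar> \<le> \<eta>" and Zle: "Z n s \<le> 0"
      if s: "s \<in> {0..R}" for s
    proof -
      have As: "A * s \<in> {0..A * R}" using s A by (auto intro: mult_left_mono)
      define v where "v = u n (A * s)"
      have v: "\<tau> \<le> v" "v \<le> \<mu>" "c * (\<mu> - v) \<le> M" using ub[OF As] by (auto simp: v_def)
      have Zv: "Z n s = - c * (\<mu> - v)" by (simp add: Z_def v_def c_def A_def \<mu>_def algebra_simps)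
      show "Z n s \<le> 0" using Zv v c by simp
      have fv: "0 < f v" using f_pos v \<tau> T1 by auto
      define E where "E = exp (ln (f v) - ln (f \<mu>))"
      have E: "E = f v / f \<mu>" using fv fmu by (simp add: E_def exp_diff)
      have E1: "0 < E" "E \<le> 1" using lnf_mono[of v \<mu>] v \<tau> T1 by (auto simp: E_def)
      have Gv: "G n s = h (A * s) / h 0 * E"
      proof -
        have "G n s = (c * A^2 * lam n) * h (A * s) * f v" by (simp add: G_def c_def A_def v_def)
        also have "c * A^2 * lam n = 1 / (h 0 * f \<mu>)" using key1 h0 fmu by (simp add: field_simps)
        finally show ?thesis using E by simp
      qed
      have As1: "A * s \<in> {0..1}" "A * s < \<delta>" using As AR1 by auto
      have hb: "\<bar>h (A * s) / h 0 - 1\<bar> \<le> \<eta> / 2"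
      proof -
        have "\<bar>h (A * s) - h 0\<bar> < \<eta> / 2 * h 0" using \<delta>(2) As1 by auto
        then have "\<bar>h (A * s) - h 0\<bar> / h 0 \<le> \<eta> / 2" using h0 by (simp add: field_simps)
        moreover have "h (A * s) / h 0 - 1 = (h (A * s) - h 0) / h 0" using h0 by (simp add: field_simps)
        ultimately show ?thesis using h0 by (simp add: abs_divide)
      qed
      have le: "\<bar>ln (f v) - ln (f \<mu>) - Z n s\<bar> \<le> M * (M * \<eta>')"
      proof -
        have "ln (f v) - ln (f \<mu>) - Z n s = ln (f v) - ln (f \<mu>) + c * (\<mu> - v)" using Zv by simp
        moreover have "(\<mu> - v) * (c - gd \<tau>) \<le> (M / c) * (M * \<eta>' * c)"
        proof (rule mult_mono)
          show "\<mu> - v \<le> M / c" using v c by (simp add: field_simps)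
        qed (use \<epsilon>' gd\<tau> M c in auto)
        moreover have "(M / c) * (M * \<eta>' * c) = M * (M * \<eta>')" using c by simp
        ultimately show ?thesis using logest[OF v(1,2)] by auto
      qed
      have "G n s - exp (Z n s) = (h (A * s) / h 0 - 1) * E + (E - exp (Z n s))" using Gv by (simp add: algebra_simps)
      then have "\<bar>G n s - exp (Z n s)\<bar> = \<bar>(h (A * s) / h 0 - 1) * E + (E - exp (Z n s))\<bar>" by simp
      also have "\<dots> \<le> \<bar>(h (A * s) / h 0 - 1) * E\<bar> + \<bar>E - exp (Z n s)\<bar>" by (rule abs_triangle_ineq)
      also have "\<bar>(h (A * s) / h 0 - 1) * E\<bar> + \<bar>E - exp (Z n s)\<bar> = \<bar>h (A * s) / h 0 - 1\<bar> * E + \<bar>E - exp (Z n s)\<bar>" using E1 by (simp add: abs_mult)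
      also have "\<dots> \<le> \<eta> / 2 * 1 + M * (M * \<eta>')"
      proof (rule add_mono)
        show "\<bar>h (A * s) / h 0 - 1\<bar> * E \<le> \<eta> / 2 * 1" using hb E1 \<eta> by (intro mult_mono) auto
        have "\<bar>E - exp (Z n s)\<bar> \<le> \<bar>ln (f v) - ln (f \<mu>) - Z n s\<bar>"
          unfolding E_def by (rule exp_lip) (use lnf_mono[of v \<mu>] v \<tau> T1 Zv c in auto)
        then show "\<bar>E - exp (Z n s)\<bar> \<le> M * (M * \<eta>')" using le by simp
      qed
      also have "\<dots> \<le> \<eta>"
      proof -
        have "M * (M * \<eta>') \<le> M * \<epsilon>1" using \<eta>'(2) M by (intro mult_left_mono) auto
        then show ?thesis using \<epsilon>1a by linarith
      qed
      finally show "\<bar>G n s - exp (Z n s)\<bar> \<le> \<eta>" .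
    qed
    have An: "a n = A" by (simp add: A_def)
    have an1: "0 < a n" "a n * R \<le> 1" using A AR1 An by auto
    have dWx: "((\<lambda>s. Z n s - zlA s) has_real_derivative Z1 n s - zlB s) (at s within {0..R})"
      if s: "s \<in> {0..R}" for s
      using DERIV_diff[OF Z_derivs(1)[OF an1 s] has_field_derivative_at_within[OF zlA_facts(1)]] .
    have dW1x: "((\<lambda>s. Z1 n s - zlB s) has_real_derivative Z2 n s - zlC s) (at s within {0..R})"
      if s: "s \<in> {0..R}" for s
      using DERIV_diff[OF Z_derivs(2)[OF an1 s] has_field_derivative_at_within[OF zlA_facts(2)]] .
    have gr: "\<forall>s\<in>{0..R}. \<bar>Z n s - zlA s\<bar> \<le> Kc * \<eta> \<and> \<bar>Z1 n s - zlB s\<bar> \<le> Kc * \<eta> \<and> \<bar>Z2 n s - zlC s\<bar> \<le> Kc * \<eta>"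
      unfolding Kc_def
    proof (rule gronwall_core[OF R \<eta>, where D = "\<lambda>s. G n s - exp (zlA s)" and W = "\<lambda>s. Z n s - zlA s"
        and Wp = "\<lambda>s. Z1 n s - zlB s" and Wpp = "\<lambda>s. Z2 n s - zlC s"])
      fix s assume s: "s \<in> {0..R}"
      show "((\<lambda>s. Z n s - zlA s) has_real_derivative Z1 n s - zlB s) (at s within {0..R})"
        by (rule dWx[OF s])
      show "((\<lambda>s. Z1 n s - zlB s) has_real_derivative Z2 n s - zlC s) (at s within {0..R})"
        by (rule dW1x[OF s])
      have "\<bar>G n s - exp (zlA s)\<bar> \<le> \<bar>G n s - exp (Z n s)\<bar> + \<bar>exp (Z n s) - exp (zlA s)\<bar>" by linarith
      also have "\<dots> \<le> \<eta> + \<bar>Z n s - zlA s\<bar>"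
        using GZ[OF s] exp_lip[OF Zle[OF s] zlA_facts(4)[of s]] by linarith
      finally show "\<bar>G n s - exp (zlA s)\<bar> \<le> \<eta> + \<bar>Z n s - zlA s\<bar>" .
    next
      show "continuous_on {0..R} (\<lambda>s. Z2 n s - zlC s)"
        using Z2_cont[OF an1] zlA_facts(8) by (intro continuous_intros)
      show "Z n 0 - zlA 0 = 0" "Z1 n 0 - zlB 0 = 0" using Z_0 zlA_facts(5,6) by auto
    next
      fix s assume s: "0 < s" "s \<le> R"
      show "Z2 n s - zlC s = - (G n s - exp (zlA s)) - (Z1 n s - zlB s) / s"
      proof -
        have "Z2 n s = - G n s - Z1 n s / s" using Z_ode[of n R s] s an1 AR1 An by simp
        moreover have "zlC s = - exp (zlA s) - zlB s / s" using zlA_facts(7)[of s] s by simp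
        ultimately show ?thesis by (simp add: diff_divide_distrib)
      qed
    qed
    have d1eq: "d1 {0..R} (\<lambda>r. Z n r - zlA r) x = Z1 n x - zlB x" if x: "x \<in> {0..R}" for x
    proof -
      have "((\<lambda>s. Z n s - zlA s) has_real_derivative Z1 n x - zlB x) (at x within {0..R})"
        by (rule dWx[OF x])
      then show ?thesis unfolding d1_def
        by (intro vector_derivative_within_closed_interval[OF R x])
          (simp add: has_real_derivative_iff_has_vector_derivative)
    qed
    have d2eq: "d2 {0..R} (\<lambda>r. Z n r - zlA r) x = Z2 n x - zlC x" if x: "x \<in> {0..R}" for x
    proof -
      have "((\<lambda>s. Z1 n s - zlB s) has_real_derivative Z2 n x - zlC x) (at x within {0..R})"
        by (rule dW1x[OF x])
      then have "(d1 {0..R} (\<lambda>r. Z n r - zlA r) has_real_derivative Z2 n x - zlC x) (at x within {0..R})"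
        by (rule has_field_derivative_transform_within[where d=1]) (use x d1eq in auto)
      then show ?thesis unfolding d2_def
        by (intro vector_derivative_within_closed_interval[OF R x])
          (simp add: has_real_derivative_iff_has_vector_derivative)
    qed
    have SUPb: "0 \<le> (SUP x\<in>{0..R}. \<bar>F x\<bar>) \<and> (SUP x\<in>{0..R}. \<bar>F x\<bar>) \<le> Kc * \<eta>"
      if F: "\<And>x. x \<in> {0..R} \<Longrightarrow> \<bar>F x\<bar> \<le> Kc * \<eta>" for F :: "real \<Rightarrow> real"
    proof
      have bd: "bdd_above ((\<lambda>x. \<bar>F x\<bar>) ` {0..R})" by (rule bdd_aboveI2) (rule F)
      have "\<bar>F 0\<bar> \<le> (SUP x\<in>{0..R}. \<bar>F x\<bar>)" by (rule cSUP_upper[OF _ bd]) (use R in auto)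
      then show "0 \<le> (SUP x\<in>{0..R}. \<bar>F x\<bar>)" by linarith
      show "(SUP x\<in>{0..R}. \<bar>F x\<bar>) \<le> Kc * \<eta>" by (rule cSUP_least) (use R F in auto)
    qed
    have C2: "\<bar>C2_norm {0..R} (\<lambda>r. Z n r - zlA r)\<bar> \<le> e"
    proof -
      have e1: "(SUP x\<in>{0..R}. \<bar>d1 {0..R} (\<lambda>r. Z n r - zlA r) x\<bar>) = (SUP x\<in>{0..R}. \<bar>Z1 n x - zlB x\<bar>)"
        by (intro SUP_cong refl) (simp add: d1eq)
      have e2: "(SUP x\<in>{0..R}. \<bar>d2 {0..R} (\<lambda>r. Z n r - zlA r) x\<bar>) = (SUP x\<in>{0..R}. \<bar>Z2 n x - zlC x\<bar>)"
        by (intro SUP_cong refl) (simp add: d2eq)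
      have b0: "0 \<le> (SUP x\<in>{0..R}. \<bar>Z n x - zlA x\<bar>) \<and> (SUP x\<in>{0..R}. \<bar>Z n x - zlA x\<bar>) \<le> Kc * \<eta>"
        by (rule SUPb) (use gr in auto)
      have b1: "0 \<le> (SUP x\<in>{0..R}. \<bar>Z1 n x - zlB x\<bar>) \<and> (SUP x\<in>{0..R}. \<bar>Z1 n x - zlB x\<bar>) \<le> Kc * \<eta>"
        by (rule SUPb) (use gr in auto)
      have b2: "0 \<le> (SUP x\<in>{0..R}. \<bar>Z2 n x - zlC x\<bar>) \<and> (SUP x\<in>{0..R}. \<bar>Z2 n x - zlC x\<bar>) \<le> Kc * \<eta>"
        by (rule SUPb) (use gr in auto)
      show ?thesis unfolding C2_norm_def e1 e2 using b0 b1 b2 \<eta>1 e by linarith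
    qed
    have ARpos: "0 < A * R" using A R by simp
    define I where "I = integral {0..A * R} (\<lambda>r. lam n * h r * f (u n r) * r)"
    have I: "I = - (A * R * u' n (A * R))"
      unfolding I_def using u_integral[of "A * R" n] ARpos AR1 by (simp add: integral_unique)
    have cI: "c * I = - R * Z1 n R" by (simp add: I Z1_def c_def A_def algebra_simps)
    have Rin: "R \<in> {0..R}" using R by simp
    have z01R: "- R * zlB R = 4 * R^2 / (8 + R^2)" by (simp add: zlB_def power2_eq_square)
    have intb: "\<bar>c * I - 4 * R^2 / (8 + R^2)\<bar> \<le> e / 2"
    proof -
      have "c * I - 4 * R^2 / (8 + R^2) = - R * (Z1 n R - zlB R)" using cI z01R by (simp add: algebra_simps)
      then have "\<bar>c * I - 4 * R^2 / (8 + R^2)\<bar> = R * \<bar>Z1 n R - zlB R\<bar>" using R by (simp add: abs_mult)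
      also have "\<dots> \<le> R * (Kc * \<eta>)" using gr Rin R by (intro mult_left_mono) auto
      finally show ?thesis using \<eta>1 by linarith
    qed
    have S01: "{0..A * R} \<subseteq> {0..1}" using AR1 by auto
    have intA: "(\<lambda>r. lam n * h r * f (u n r) * r) integrable_on {0..A * R}"
      by (rule integrable_continuous_interval, rule continuous_on_subset[OF A_cont S01])
    have intB: "(\<lambda>r. lam n * h r * f' (u n r) * r) integrable_on {0..A * R}"
      by (rule integrable_continuous_interval, rule continuous_on_subset[OF B_cont S01])
    define IB where "IB = integral {0..A * R} (\<lambda>r. lam n * h r * f' (u n r) * r)"
    have Bpt: "lam n * h r * f' (u n r) * r = gd (u n r) * (lam n * h r * f (u n r) * r)"
      and Apos: "0 \<le> lam n * h r * f (u n r) * r"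
      and gdu: "gd \<tau> \<le> gd (u n r)" "gd (u n r) \<le> c"
      if r: "r \<in> {0..A * R}" for r
    proof -
      have "t0 < u n r" using ub(3)[OF r] \<tau> T1 by linarith
      then show "lam n * h r * f' (u n r) * r = gd (u n r) * (lam n * h r * f (u n r) * r)"
        using f'_eq by simp
      show "0 \<le> lam n * h r * f (u n r) * r"
      proof -
        have "0 < h r" using h_pos r S01 by auto
        then show ?thesis using lampos fu_nonneg[of r n] r S01 by (intro mult_nonneg_nonneg) auto
      qed
      show "gd \<tau> \<le> gd (u n r)" "gd (u n r) \<le> c"
        using gd_mono[of \<tau> "u n r"] gd_mono[of "u n r" \<mu>] ub[OF r] \<tau> T1 by (auto simp: c_def \<mu>_def)
    qed
    have IB1: "IB \<le> c * I"
    proof -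
      have "IB \<le> integral {0..A * R} (\<lambda>r. c * (lam n * h r * f (u n r) * r))"
        unfolding IB_def
      proof (rule integral_le[OF intB integrable_on_mult_right[OF intA]])
        fix r assume r: "r \<in> {0..A * R}"
        show "lam n * h r * f' (u n r) * r \<le> c * (lam n * h r * f (u n r) * r)"
          unfolding Bpt[OF r] using Apos[OF r] gdu(2)[OF r] by (rule mult_right_mono[rotated])
      qed
      then show ?thesis by (simp add: I_def)
    qed
    have IB2: "gd \<tau> * I \<le> IB"
    proof -
      have "integral {0..A * R} (\<lambda>r. gd \<tau> * (lam n * h r * f (u n r) * r)) \<le> IB"
        unfolding IB_def
      proof (rule integral_le[OF integrable_on_mult_right[OF intA] intB])
        fix r assume r: "r \<in> {0..A * R}"
        show "gd \<tau> * (lam n * h r * f (u n r) * r) \<le> lam n * h r * f' (u n r) * r"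
          unfolding Bpt[OF r] using Apos[OF r] gdu(1)[OF r] by (rule mult_right_mono[rotated])
      qed
      then show ?thesis by (simp add: I_def)
    qed
    have cIb: "0 \<le> c * I" "c * I \<le> Q * R^2 / 2"
    proof -
      have "0 \<le> I" unfolding I_def by (rule integral_nonneg[OF intA]) (use Apos in auto)
      then show "0 \<le> c * I" using c by simp
      have ARin: "A * R \<in> {0..A * R}" using ARpos by simp
      have "c * I = R * (c * (- u' n (A * R)) * A)" using I by (simp add: algebra_simps)
      also have "\<dots> \<le> R * (Q * R / 2)"
      proof -
        have "c * (- u' n (A * R)) * A \<le> c * \<bar>u' n (A * R)\<bar> * A"
          using c A by (intro mult_right_mono mult_left_mono) auto
        then have "c * (- u' n (A * R)) * A \<le> Q * R / 2" using ub(4)[OF ARin] by linarith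
        then show ?thesis using R by (intro mult_left_mono) auto
      qed
      finally show "c * I \<le> Q * R^2 / 2" by (simp add: power2_eq_square mult.commute mult.left_commute)
    qed
    have intc: "\<bar>IB - c * I\<bar> \<le> e / 2"
    proof -
      have "\<bar>IB - c * I\<bar> \<le> (c - gd \<tau>) * I" using IB1 IB2 by (simp add: algebra_simps)
      also have "\<dots> = ((c - gd \<tau>) / c) * (c * I)" using c by simp
      also have "\<dots> \<le> (M * \<eta>') * (Q * R^2 / 2)"
      proof (rule mult_mono)
        show "(c - gd \<tau>) / c \<le> M * \<eta>'" using \<epsilon>' c by (simp add: field_simps)
      qed (use cIb gd\<tau> M \<eta>' in auto)
      also have "\<dots> \<le> \<epsilon>1 * (Q * R^2 / 2)" using \<eta>'(2) Q by (intro mult_right_mono) auto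
      finally show ?thesis using \<epsilon>1b by linarith
    qed
    have intd: "\<bar>u n (A * R) / \<mu> - 1\<bar> \<le> e"
    proof -
      have ARin: "A * R \<in> {0..A * R}" using ARpos by simp
      have m: "0 < \<mu>" using mu_pos by (simp add: \<mu>_def)
      have "\<mu> - u n (A * R) \<le> M / c" using ub(1)[OF ARin] c by (simp add: field_simps)
      also have "\<dots> \<le> M / c1" by (rule Mc)
      finally have d: "\<bar>u n (A * R) - \<mu>\<bar> \<le> M / c1" using ub(2)[OF ARin] by simp
      have "M / c1 \<le> e * \<mu>"
      proof -
        have "M / (c1 * e) \<le> \<mu>" using mu_big M c1 T1 \<tau> by (smt (verit) Mce divide_nonneg_pos max.cobounded1)
        then show ?thesis using c1 e by (simp add: field_simps)
      qed
      then have "\<bar>u n (A * R) - \<mu>\<bar> / \<mu> \<le> e" using d m by (simp add: field_simps)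
      moreover have "u n (A * R) / \<mu> - 1 = (u n (A * R) - \<mu>) / \<mu>" using m by (simp add: field_simps)
      ultimately show ?thesis using m by (simp add: abs_divide)
    qed
    have tri: "\<bar>IB - 4 * R^2 / (8 + R^2)\<bar> \<le> e"
    proof -
      have "\<bar>(IB - c * I) + (c * I - 4 * R^2 / (8 + R^2))\<bar> \<le> \<bar>IB - c * I\<bar> + \<bar>c * I - 4 * R^2 / (8 + R^2)\<bar>"
        by (rule abs_triangle_ineq)
      then show ?thesis using intb intc by simp
    qed
    have cmu: "gd \<mu> = c" by (simp add: c_def \<mu>_def)
    have intb': "\<bar>c * I - 4 * R^2 / (8 + R^2)\<bar> \<le> e" using intb e by linarith
    show ?case
      unfolding A_def[symmetric] \<mu>_def[symmetric] I_def[symmetric] IB_def[symmetric] cmu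
      by (intro conjI A AR1(1) AR1(3) C2 intb' tri intd)
  qed
qed

end

theorem theorem1p1:
  fixes h h' f f' f'' gd gdd :: "real \<Rightarrow> real"
    and t0 :: real
    and lam mu :: "nat \<Rightarrow> real"
    and u u' u'' :: "nat \<Rightarrow> real \<Rightarrow> real"
  assumes h_pos: "\<forall>r\<in>{0..1}. h r > 0"
    and h_C1: "\<forall>r\<in>{0..1}. (h has_real_derivative h' r) (at r within {0..1})"
    and h'_cont: "continuous_on {0..1} h'"
    and f_nonneg: "\<forall>t\<ge>0. f t \<ge> 0"
    and f_C1: "\<forall>t\<ge>0. (f has_real_derivative f' t) (at t within {0..})"
    and f'_cont: "continuous_on {0..} f'"
    and t0: "t0 \<ge> 0"
    and f_pos: "\<forall>t\<ge>t0. f t > 0"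
    and f_C2: "\<forall>t\<ge>t0. (f' has_real_derivative f'' t) (at t within {t0..})"
    and f''_cont: "continuous_on {t0..} f''"
    and gd: "\<forall>t\<ge>t0. ((\<lambda>s. ln (f s)) has_real_derivative gd t) (at t within {t0..})"
    and gdd: "\<forall>t\<ge>t0. (gd has_real_derivative gdd t) (at t within {t0..})"
    and H1: "H1 f gd gdd t0"
    and lam_pos: "\<forall>n. lam n > 0"
    and mu_pos: "\<forall>n. mu n > 0"
    and u_d1: "\<forall>n. \<forall>r\<in>{0..1}. (u n has_real_derivative u' n r) (at r within {0..1})"
    and u_d2: "\<forall>n. \<forall>r\<in>{0..1}. (u' n has_real_derivative u'' n r) (at r within {0..1})"
    and u''_cont: "\<forall>n. continuous_on {0..1} (u'' n)"
    and ode: "\<forall>n. \<forall>r\<in>{0<..<1}. - u'' n r - u' n r / r = lam n * h r * f (u n r)"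
    and u_pos: "\<forall>n. \<forall>r\<in>{0<..<1}. u n r > 0"
    and bc: "\<forall>n. u n 0 = mu n \<and> u' n 0 = 0 \<and> u n 1 = 0"
    and mu_lim: "filterlim mu at_top sequentially"
  defines "\<gamma> \<equiv> (\<lambda>n. sqrt (1 / (lam n * h 0 * f' (mu n))))"
    and "z \<equiv> (\<lambda>n r. gd (mu n) * (u n (sqrt (1 / (lam n * h 0 * f' (mu n))) * r) - mu n))"
    and "z0 \<equiv> (\<lambda>r::real. ln (64 / (8 + r\<^sup>2)\<^sup>2))"
  shows "\<gamma> \<longlonglongrightarrow> 0 \<and>
    (\<exists>s::nat \<Rightarrow> nat. strict_mono s \<and> (\<exists>\<rho>::nat \<Rightarrow> real.
       (\<forall>n. 0 < \<rho> n \<and> \<rho> n < 1) \<and>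
       (\<lambda>n. u (s n) (\<rho> n) / mu (s n)) \<longlonglongrightarrow> 1 \<and>
       \<rho> \<longlonglongrightarrow> 0 \<and>
       filterlim (\<lambda>n. \<rho> n / \<gamma> (s n)) at_top sequentially \<and>
       (\<lambda>n. C2_norm {0..\<rho> n / \<gamma> (s n)} (\<lambda>r. z (s n) r - z0 r)) \<longlonglongrightarrow> 0 \<and>
       (\<lambda>n. gd (mu (s n)) * integral {0..\<rho> n} (\<lambda>r. lam (s n) * h r * f (u (s n) r) * r))
          \<longlonglongrightarrow> 4 \<and>
       (\<lambda>n. integral {0..\<rho> n} (\<lambda>r. lam (s n) * h r * f' (u (s n) r) * r))
          \<longlonglongrightarrow> 4))"
proof -
  interpret setting h h' f f' f'' gd gdd t0 lam mu u u' u''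
    by unfold_locales (fact h_pos h_C1 f_nonneg f_C1 f'_cont t0 f_pos gd gdd H1 lam_pos mu_pos
        u_d1 u_d2 u''_cont ode u_pos bc mu_lim)+
  have ga: "\<gamma> = a" unfolding \<gamma>_def by (simp add: a_def fun_eq_iff)
  have zZ: "z = Z" unfolding z_def by (simp add: Z_def a_def fun_eq_iff)
  have z0l: "z0 = zlA" unfolding z0_def by (simp add: zlA_def fun_eq_iff)
  have ev: "\<forall>\<^sub>F n in sequentially. 0 < a n \<and> a n * (real k + 1) < 1 \<and> a n * (real k + 1) \<le> 1 / (real k + 1) \<and>
     \<bar>C2_norm {0..real k + 1} (\<lambda>r. Z n r - zlA r)\<bar> \<le> 1 / (real k + 1) \<and>
     \<bar>gd (mu n) * integral {0..a n * (real k + 1)} (\<lambda>r. lam n * h r * f (u n r) * r) - 4 * (real k + 1)^2 / (8 + (real k + 1)^2)\<bar> \<le> 1 / (real k + 1) \<and>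
     \<bar>integral {0..a n * (real k + 1)} (\<lambda>r. lam n * h r * f' (u n r) * r) - 4 * (real k + 1)^2 / (8 + (real k + 1)^2)\<bar> \<le> 1 / (real k + 1) \<and>
     \<bar>u n (a n * (real k + 1)) / mu n - 1\<bar> \<le> 1 / (real k + 1)" for k
    by (rule key) auto
  then have "\<forall>k. \<exists>N. \<forall>n\<ge>N. 0 < a n \<and> a n * (real k + 1) < 1 \<and> a n * (real k + 1) \<le> 1 / (real k + 1) \<and>
     \<bar>C2_norm {0..real k + 1} (\<lambda>r. Z n r - zlA r)\<bar> \<le> 1 / (real k + 1) \<and>
     \<bar>gd (mu n) * integral {0..a n * (real k + 1)} (\<lambda>r. lam n * h r * f (u n r) * r) - 4 * (real k + 1)^2 / (8 + (real k + 1)^2)\<bar> \<le> 1 / (real k + 1) \<and>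
     \<bar>integral {0..a n * (real k + 1)} (\<lambda>r. lam n * h r * f' (u n r) * r) - 4 * (real k + 1)^2 / (8 + (real k + 1)^2)\<bar> \<le> 1 / (real k + 1) \<and>
     \<bar>u n (a n * (real k + 1)) / mu n - 1\<bar> \<le> 1 / (real k + 1)"
    unfolding eventually_sequentially by blast
  from choice[OF this] obtain N where N: "\<And>k n. n \<ge> N k \<Longrightarrow> 0 < a n \<and> a n * (real k + 1) < 1 \<and> a n * (real k + 1) \<le> 1 / (real k + 1) \<and>
     \<bar>C2_norm {0..real k + 1} (\<lambda>r. Z n r - zlA r)\<bar> \<le> 1 / (real k + 1) \<and>
     \<bar>gd (mu n) * integral {0..a n * (real k + 1)} (\<lambda>r. lam n * h r * f (u n r) * r) - 4 * (real k + 1)^2 / (8 + (real k + 1)^2)\<bar> \<le> 1 / (real k + 1) \<and>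
     \<bar>integral {0..a n * (real k + 1)} (\<lambda>r. lam n * h r * f' (u n r) * r) - 4 * (real k + 1)^2 / (8 + (real k + 1)^2)\<bar> \<le> 1 / (real k + 1) \<and>
     \<bar>u n (a n * (real k + 1)) / mu n - 1\<bar> \<le> 1 / (real k + 1)"
    by blast
  define s where "s k = (\<Sum>i\<le>k. N i) + k" for k
  have smono: "strict_mono s" unfolding strict_mono_Suc_iff by (simp add: s_def)
  have sN: "N k \<le> s k" for k
  proof -
    have "N k \<le> (\<Sum>i\<le>k. N i)" by (rule member_le_sum) auto
    then show ?thesis by (simp add: s_def)
  qed
  define \<rho> where "\<rho> k = a (s k) * (real k + 1)" for k
  have P: "0 < a (s k) \<and> \<rho> k < 1 \<and> \<rho> k \<le> 1 / (real k + 1) \<and>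
     \<bar>C2_norm {0..real k + 1} (\<lambda>r. Z (s k) r - zlA r)\<bar> \<le> 1 / (real k + 1) \<and>
     \<bar>gd (mu (s k)) * integral {0..\<rho> k} (\<lambda>r. lam (s k) * h r * f (u (s k) r) * r) - 4 * (real k + 1)^2 / (8 + (real k + 1)^2)\<bar> \<le> 1 / (real k + 1) \<and>
     \<bar>integral {0..\<rho> k} (\<lambda>r. lam (s k) * h r * f' (u (s k) r) * r) - 4 * (real k + 1)^2 / (8 + (real k + 1)^2)\<bar> \<le> 1 / (real k + 1) \<and>
     \<bar>u (s k) (\<rho> k) / mu (s k) - 1\<bar> \<le> 1 / (real k + 1)" for k
    unfolding \<rho>_def using N[OF sN[of k]] by blast
  have ratio: "\<rho> k / a (s k) = real k + 1" for k using P[of k] by (simp add: \<rho>_def)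
  show ?thesis
    unfolding ga zZ z0l
  proof (intro conjI exI[of _ s] exI[of _ \<rho>] smono allI)
    show "a \<longlonglongrightarrow> 0" by (rule a_lim)
    fix n
    show "0 < \<rho> n" using P[of n] by (simp add: \<rho>_def)
    show "\<rho> n < 1" using P[of n] by simp
  next
    show "(\<lambda>n. u (s n) (\<rho> n) / mu (s n)) \<longlonglongrightarrow> 1"
      by (rule approx_lim[OF _ inv_lim tendsto_const]) (use P in blast)
    show "\<rho> \<longlonglongrightarrow> 0"
    proof (rule approx_lim[OF _ inv_lim tendsto_const])
      fix n
      have "0 < \<rho> n" "\<rho> n \<le> 1 / (real n + 1)" using P[of n] by (simp_all add: \<rho>_def)
      then show "\<bar>\<rho> n - 0\<bar> \<le> 1 / (real n + 1)" by simp
    qed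
    show "filterlim (\<lambda>n. \<rho> n / a (s n)) at_top sequentially"
      unfolding ratio by (rule top_lim)
    show "(\<lambda>n. C2_norm {0..\<rho> n / a (s n)} (\<lambda>r. Z (s n) r - zlA r)) \<longlonglongrightarrow> 0"
      unfolding ratio by (rule approx_lim[OF _ inv_lim tendsto_const]) (use P in simp)
    show "(\<lambda>n. gd (mu (s n)) * integral {0..\<rho> n} (\<lambda>r. lam (s n) * h r * f (u (s n) r) * r)) \<longlonglongrightarrow> 4"
      by (rule approx_lim[OF _ inv_lim four_lim]) (use P in blast)
    show "(\<lambda>n. integral {0..\<rho> n} (\<lambda>r. lam (s n) * h r * f' (u (s n) r) * r)) \<longlonglongrightarrow> 4"
      by (rule approx_lim[OF _ inv_lim four_lim]) (use P in blast)
  qed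
qed


end
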